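(* Let $A$ be a $2\times2$ Hermitian matrix of Laurent polynomials with compatible symmetry whose symmetry type is $\mathrm{S}A(z)=\begin{bmatrix}1&\alpha(z)\\ \alpha^\star(z)&1\end{bmatrix}$, where $\alpha(z):=\mathrm{S}A_{1,2}(z)$. Suppose $\det(A(z))=C$ for all $z\in\mathbb T$, for some negative constant $C$. Then there exists a $2\times2$ matrix $U$ of Laurent polynomials with compatible symmetry such that $A(z)=U(z)\,\mathrm{diag}(1,-1)\,U^\star(z)$ and $$\frac{\mathrm{S}U_{1,1}(z)}{\mathrm{S}U_{2,1}(z)}=\frac{\mathrm{S}U_{1,2}(z)}{\mathrm{S}U_{2,2}(z)}=\alpha(z).$$
   Context: Laurent polynomials $u(z)=\sum_ku(k)z^k$ with finitely many nonzero complex coefficients; $\mathbb T:=\{z\in\mathbb C:|z|=1\}$. For a matrix $P(z)=\sum_kP(k)z^k$, $P^\star(z):=\sum_k\overline{P(k)}^Tz^{-k}$; Hermitian means $P^\star=P$. $u$ has symmetry of type $\epsilon z^c$ ($\epsilon\in\{\pm1\},c\in\mathbb Z$) if $u(z)=\epsilon z^cu(z^{-1})$; for nonzero $u$, $\mathrm{S}u(z):=u(z)/u(z^{-1})$; zero has every type; for a type $\beta=\epsilon z^c$, $\beta^\star:=\epsilon z^{-c}$. For a matrix $P$ whose entries have symmetry, $\mathrm{S}P$ is taken entrywise. An $r\times s$ matrix $P$ has compatible symmetry if there exist types $\tau_1,\dots,\tau_r,\rho_1,\dots,\rho_s$, each of the form $\pm z^m$ ($m\in\mathbb Z$), such that each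 entry $P_{j,k}$ has symmetry of type $\tau_j^{-1}\rho_k$. *)

theory Defs
  imports "HOL-Analysis.Analysis"
begin

text \<open>Laurent polynomials are represented by their coefficient functions
  u :: int => complex, with u(z) = sum_k u k * z^k; they must have finite support.\<close>

type_synonym lpoly = "int \<Rightarrow> complex"

definition laurent :: "lpoly \<Rightarrow> bool" where
  "laurent u \<longleftrightarrow> finite {k. u k \<noteq> 0}"

definition lp_eval :: "lpoly \<Rightarrow> complex \<Rightarrow> complex" where
  "lp_eval u z = (\<Sum>k\<in>{k. u k \<noteq> 0}. u k * z powi k)"

definition lp_add :: "lpoly \<Rightarrow> lpoly \<Rightarrow> lpoly" where
  "lp_add u v = (\<lambda>k. u k + v k)"

definition lp_neg :: "lpoly \<Rightarrow> lpoly" where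
  "lp_neg u = (\<lambda>k. - u k)"

definition lp_mult :: "lpoly \<Rightarrow> lpoly \<Rightarrow> lpoly" where
  "lp_mult u v = (\<lambda>n. \<Sum>k\<in>{k. u k \<noteq> 0}. u k * v (n - k))"

definition lp_star :: "lpoly \<Rightarrow> lpoly" where
  "lp_star u = (\<lambda>k. cnj (u (- k)))"

text \<open>A symmetry type eps * z^c is represented by the pair (eps, c), with eps in {1,-1}.\<close>
type_synonym symtype = "int \<times> int"

definition valid_type :: "symtype \<Rightarrow> bool" where
  "valid_type t \<longleftrightarrow> fst t = 1 \<or> fst t = -1"

definition type_mult :: "symtype \<Rightarrow> symtype \<Rightarrow> symtype" where
  "type_mult s t = (fst s * fst t, snd s + snd t)"

definition type_inv :: "symtype \<Rightarrow> symtype" where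
  "type_inv t = (fst t, - snd t)"

definition type_star :: "symtype \<Rightarrow> symtype" where
  "type_star t = (fst t, - snd t)"

text \<open>u has symmetry of type eps z^c: u(z) = eps z^c u(1/z), i.e. u k = eps * u (c - k)
  for all k. (Zero has every type.)\<close>
definition has_sym :: "lpoly \<Rightarrow> symtype \<Rightarrow> bool" where
  "has_sym u t \<longleftrightarrow> valid_type t \<and> (\<forall>k. u k = of_int (fst t) * u (snd t - k))"

text \<open>Matrices: P :: nat => nat => lpoly, entries indexed by 1..r and 1..s.
  Compatible symmetry for an r x s matrix.\<close>
definition compat_sym :: "nat \<Rightarrow> nat \<Rightarrow> (nat \<Rightarrow> nat \<Rightarrow> lpoly) \<Rightarrow> bool" where
  "compat_sym r s P \<longleftrightarrow>
     (\<exists>\<tau> \<rho> :: nat \<Rightarrow> symtype.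
        (\<forall>j\<in>{1..r}. valid_type (\<tau> j)) \<and> (\<forall>k\<in>{1..s}. valid_type (\<rho> k)) \<and>
        (\<forall>j\<in>{1..r}. \<forall>k\<in>{1..s}. has_sym (P j k) (type_mult (type_inv (\<tau> j)) (\<rho> k))))"

end

theory Submission
  imports Defs "HOL-Library.Poly_Mapping" "HOL-Computational_Algebra.Polynomial"
begin


type_synonym L = "int \<Rightarrow>\<^sub>0 complex"

abbreviation co :: "L \<Rightarrow> int \<Rightarrow> complex" where "co \<equiv> Poly_Mapping.lookup"
abbreviation ks :: "L \<Rightarrow> int set" where "ks \<equiv> Poly_Mapping.keys"
abbreviation mo :: "int \<Rightarrow> complex \<Rightarrow> L" where "mo \<equiv> Poly_Mapping.single"

lemma co_add: "co (f + g) k = co f k + co g k" by (simp add: lookup_add)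
lemma co_diff: "co (f - g) k = co f k - co g k" by (simp add: lookup_minus)
lemma co_mo: "co (mo j c) k = (if k = j then c else 0)"
  by (simp add: lookup_single when_def)
lemma ks_iff: "k \<in> ks f \<longleftrightarrow> co f k \<noteq> 0" by (simp add: in_keys_iff)

lemma co_mult_keys:
  fixes f g :: L
  shows "co (f * g) k = (\<Sum>l\<in>ks f. co f l * co g (k - l))"
proof -
  have 1: "Sum_any (\<lambda>q::int. (co g q when k = l + q)) = co g (k - l)" for l :: int
  proof -
    have eq: "(\<lambda>q::int. (co g q when k = l + q)) = (\<lambda>q. if q = k - l then co g q else 0)"
      by (auto simp: when_def fun_eq_iff)
    then show ?thesis by (subst eq) (rule Sum_any.delta)
  qed
  show ?thesis unfolding lookup_mult 1
    by (rule Sum_any.expand_superset) (auto simp: in_keys_iff)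
qed

lemma co_mult_sup:
  fixes f g :: L
  assumes "finite S" "\<And>l. l \<notin> S \<Longrightarrow> co f l = 0"
  shows "co (f * g) k = (\<Sum>l\<in>S. co f l * co g (k - l))"
  unfolding co_mult_keys
  by (rule sum.mono_neutral_left) (use assms in \<open>auto simp: in_keys_iff\<close>)

lemma co_mo_mult: "co (mo j c * g) k = c * co g (k - j)"
  by (subst co_mult_sup[of "{j}"]) (auto simp: co_mo)

lemma co_mult_mo: "co (g * mo j c) k = c * co g (k - j)"
  by (metis mult.commute co_mo_mult)

lemma mo_mult: "mo i a * mo j b = mo (i + j) (a * b)"
  by (simp add: mult_single)

lemma co_one: "co 1 k = (if k = 0 then 1 else 0)"
  by (simp add: lookup_one when_def)

definition st :: "L \<Rightarrow> L" where
  "st p = Abs_poly_mapping (\<lambda>k. cnj (co p (- k)))"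

lemma co_st: "co (st p) k = cnj (co p (- k))"
proof -
  have "{k. cnj (co p (- k)) \<noteq> 0} = uminus ` ks p"
  proof (rule set_eqI)
    fix x show "x \<in> {k. cnj (co p (- k)) \<noteq> 0} \<longleftrightarrow> x \<in> uminus ` ks p"
      by (auto simp: in_keys_iff image_iff intro!: bexI[of _ "- x"])
  qed
  then have "finite {k. cnj (co p (- k)) \<noteq> 0}" by simp
  then show ?thesis unfolding st_def by simp
qed

lemma st_add: "st (p + q) = st p + st q"
  by (rule poly_mapping_eqI) (simp add: co_st co_add)
lemma st_diff: "st (p - q) = st p - st q"
  by (rule poly_mapping_eqI) (simp add: co_st co_diff)
lemma st_uminus: "st (- p) = - st p"
  by (rule poly_mapping_eqI) (simp add: co_st)
lemma st_st: "st (st p) = p"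
  by (rule poly_mapping_eqI) (simp add: co_st)
lemma st_mo: "st (mo k c) = mo (- k) (cnj c)"
  by (rule poly_mapping_eqI) (auto simp: co_st co_mo)
lemma st_one: "st 1 = 1"
  by (rule poly_mapping_eqI) (auto simp: co_st co_one)
lemma st_zero: "st 0 = 0"
  by (rule poly_mapping_eqI) (auto simp: co_st)

lemma st_mult: "st (p * q) = st p * st q"
proof (rule poly_mapping_eqI)
  fix n
  have "co (st p * st q) n = (\<Sum>l\<in>uminus ` ks p. co (st p) l * co (st q) (n - l))"
    by (rule co_mult_sup) (auto simp: co_st, metis image_eqI in_keys_iff minus_minus)
  also have "\<dots> = (\<Sum>l\<in>ks p. co (st p) (- l) * co (st q) (n + l))"
    by (subst sum.reindex) (auto intro: inj_onI)
  also have "\<dots> = cnj (\<Sum>l\<in>ks p. co p l * co q (- n - l))"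
    by (simp add: co_st)
  also have "\<dots> = co (st (p * q)) n"
    by (simp add: co_st co_mult_keys)
  finally show "co (st (p * q)) n = co (st p * st q) n" by simp
qed

lemmas st_simps = st_add st_diff st_uminus st_st st_mo st_one st_zero st_mult

definition ev :: "L \<Rightarrow> complex \<Rightarrow> complex" where
  "ev p z = (\<Sum>k\<in>ks p. co p k * z powi k)"

lemma ev_sup:
  assumes "finite S" "\<And>l. l \<notin> S \<Longrightarrow> co p l = 0"
  shows "ev p z = (\<Sum>k\<in>S. co p k * z powi k)"
  unfolding ev_def
  by (rule sum.mono_neutral_left) (use assms in \<open>auto simp: in_keys_iff\<close>)

lemma ev_add: "ev (p + q) z = ev p z + ev q z"
proof -
  have "ev (p + q) z = (\<Sum>k\<in>ks p \<union> ks q. co (p + q) k * z powi k)"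
    by (rule ev_sup) (auto simp: in_keys_iff co_add)
  also have "\<dots> = (\<Sum>k\<in>ks p \<union> ks q. co p k * z powi k) + (\<Sum>k\<in>ks p \<union> ks q. co q k * z powi k)"
    by (simp add: co_add distrib_right sum.distrib)
  also have "\<dots> = ev p z + ev q z"
    by (subst (1 2) ev_sup[of "ks p \<union> ks q"]) (auto simp: in_keys_iff)
  finally show ?thesis .
qed

lemma ev_zero: "ev 0 z = 0" by (simp add: ev_def)

lemma ev_mo_mult:
  assumes "z \<noteq> 0"
  shows "ev (mo a c * q) z = c * z powi a * ev q z"
proof -
  have "ev (mo a c * q) z = (\<Sum>k\<in>(+) a ` ks q. co (mo a c * q) k * z powi k)"
  proof (rule ev_sup)
    fix l assume "l \<notin> (+) a ` ks q"
    then have "l - a \<notin> ks q" by (metis add.commute diff_add_cancel image_eqI)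
    then show "co (mo a c * q) l = 0" by (simp add: co_mo_mult in_keys_iff)
  qed simp
  also have "\<dots> = (\<Sum>l\<in>ks q. co (mo a c * q) (a + l) * z powi (a + l))"
    by (subst sum.reindex) (auto intro: inj_onI)
  also have "\<dots> = (\<Sum>l\<in>ks q. c * z powi a * (co q l * z powi l))"
    using assms by (intro sum.cong) (auto simp: co_mo_mult power_int_add)
  also have "\<dots> = c * z powi a * ev q z"
    by (simp add: ev_def sum_distrib_left)
  finally show ?thesis .
qed

lemma update_eq_add:
  assumes "co f a = 0"
  shows "Poly_Mapping.update a b f = f + mo a b"
  by (rule poly_mapping_eqI) (use assms in \<open>auto simp: lookup_update co_add co_mo\<close>)

lemma ev_mult:
  assumes "z \<noteq> 0"
  shows "ev (p * q) z = ev p z * ev q z"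
proof (induction p rule: update_induct)
  case const
  then show ?case by (simp add: ev_zero)
next
  case (update f a b)
  have fa: "co f a = 0" using update.hyps(1) by (simp add: in_keys_iff)
  have "ev (mo a b) z = b * z powi a"
    using ev_mo_mult[OF assms, of a b 1] by (simp add: ev_def co_one)
  then show ?case
    using update.IH by (simp add: update_eq_add[OF fa] distrib_right ev_add ev_mo_mult[OF assms])
qed

lemma ev_mo: "ev (mo a b) z = b * z powi a"
  by (subst ev_sup[of "{a}"]) (auto simp: co_mo)

lemma ev_diff: "ev (p - q) z = ev p z - ev q z"
  using ev_add[of "p - q" q z] by simp

lemma circle_infinite: "infinite {z::complex. cmod z = 1}"
proof
  assume fin: "finite {z::complex. cmod z = 1}"
  have eq: "{z::complex. cmod z = 1} = sphere 0 1" by (auto simp: mem_sphere)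
  have "connected (sphere (0::complex) 1)" by (rule connected_sphere) simp
  then obtain a where "sphere (0::complex) 1 = {a}"
    using fin eq connected_finite_iff_sing[of "sphere (0::complex) 1"] by auto
  moreover have "1 \<in> sphere (0::complex) 1" "-1 \<in> sphere (0::complex) 1" by (auto simp: mem_sphere)
  ultimately show False by auto
qed

lemma ev_circle_zero:
  assumes "\<And>z. cmod z = 1 \<Longrightarrow> ev p z = 0"
  shows "p = 0"
proof (rule ccontr)
  assume "p \<noteq> 0"
  define N where "N = Max (abs ` ks p)"
  have bnd: "\<bar>k\<bar> \<le> N" if "k \<in> ks p" for k
    unfolding N_def using that by (intro Max_ge) auto
  define P :: "complex poly" where "P = (\<Sum>k\<in>ks p. monom (co p k) (nat (k + N)))"
  have Ppoly: "poly P z = z ^ nat N * ev p z" if "z \<noteq> 0" for z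
  proof -
    have "poly P z = (\<Sum>k\<in>ks p. co p k * z ^ nat (k + N))"
      by (simp add: P_def poly_sum poly_monom)
    also have "\<dots> = (\<Sum>k\<in>ks p. z ^ nat N * (co p k * z powi k))"
    proof (intro sum.cong refl)
      fix k assume "k \<in> ks p"
      then have "k + N \<ge> 0" "N \<ge> 0" using bnd[of k] by auto
      then have "z ^ nat (k + N) = z powi (k + N)" "z ^ nat N = z powi N"
        by (simp_all add: power_int_def)
      moreover have "z powi (k + N) = z powi k * z powi N" using that by (simp add: power_int_add)
      ultimately show "co p k * z ^ nat (k + N) = z ^ nat N * (co p k * z powi k)" by simp
    qed
    also have "\<dots> = z ^ nat N * ev p z" by (simp add: ev_def sum_distrib_left)
    finally show ?thesis .
  qed
  have "{z. cmod z = 1} \<subseteq> {z. poly P z = 0}"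
  proof
    fix z assume "z \<in> {z. cmod z = 1}"
    then have z1: "cmod z = 1" by simp
    then have "z \<noteq> 0" by auto
    then show "z \<in> {z. poly P z = 0}" using Ppoly[OF \<open>z \<noteq> 0\<close>] assms[OF z1] by simp
  qed
  then have "P = 0"
    using finite_subset circle_infinite poly_roots_finite[of P] by blast
  obtain j where j: "j \<in> ks p" using \<open>p \<noteq> 0\<close> keys_eq_empty by blast
  have "coeff P (nat (j + N)) = (\<Sum>k\<in>ks p. if nat (k + N) = nat (j + N) then co p k else 0)"
    by (simp add: P_def coeff_sum coeff_monom)
  also have "\<dots> = (\<Sum>k\<in>ks p. if k = j then co p k else 0)"
  proof (intro sum.cong refl)
    fix k assume k: "k \<in> ks p"
    have "k + N \<ge> 0" "j + N \<ge> 0" using bnd[OF k] bnd[OF j] by auto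
    then have "(nat (k + N) = nat (j + N)) = (k = j)" by (simp add: eq_nat_nat_iff)
    then show "(if nat (k + N) = nat (j + N) then co p k else 0) = (if k = j then co p k else 0)" by simp
  qed
  also have "\<dots> = co p j" using j by simp
  finally have "co p j = 0" using \<open>P = 0\<close> by simp
  then show False using j by (simp add: in_keys_iff)
qed


definition sy :: "L \<Rightarrow> symtype \<Rightarrow> bool" where "sy p t \<longleftrightarrow> has_sym (co p) t"

lemma sy_def2: "sy p t \<longleftrightarrow> (fst t = 1 \<or> fst t = -1) \<and> (\<forall>k. co p k = of_int (fst t) * co p (snd t - k))"
  by (simp add: sy_def has_sym_def valid_type_def)

lemma sy_valid: "sy p t \<Longrightarrow> fst t = 1 \<or> fst t = -1"
  by (simp add: sy_def2)

lemma sy_co: "sy p t \<Longrightarrow> co p k = of_int (fst t) * co p (snd t - k)"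
  unfolding sy_def2 by blast

lemma syI: "fst t = 1 \<or> fst t = -1 \<Longrightarrow> (\<And>k. co p k = of_int (fst t) * co p (snd t - k)) \<Longrightarrow> sy p t"
  unfolding sy_def2 by blast

lemma sy_zero: "fst t = 1 \<or> fst t = -1 \<Longrightarrow> sy 0 t"
  by (rule syI) auto

lemma sy_add: "sy p t \<Longrightarrow> sy q t \<Longrightarrow> sy (p + q) t"
proof (rule syI)
  fix k assume a: "sy p t" "sy q t"
  show "co (p + q) k = of_int (fst t) * co (p + q) (snd t - k)"
    using sy_co[OF a(1), of k] sy_co[OF a(2), of k] by (simp add: co_add distrib_left)
qed (rule sy_valid)

lemma sy_diff: "sy p t \<Longrightarrow> sy q t \<Longrightarrow> sy (p - q) t"
proof (rule syI)
  fix k assume a: "sy p t" "sy q t"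
  show "co (p - q) k = of_int (fst t) * co (p - q) (snd t - k)"
    using sy_co[OF a(1), of k] sy_co[OF a(2), of k] by (simp add: co_diff right_diff_distrib)
qed (rule sy_valid)

lemma sy_uminus: "sy p t \<Longrightarrow> sy (- p) t"
proof (rule syI)
  fix k assume a: "sy p t"
  show "co (- p) k = of_int (fst t) * co (- p) (snd t - k)"
    using sy_co[OF a(1), of k] by simp
qed (rule sy_valid)

lemma sy_mo: "t = (1, 2 * k) \<Longrightarrow> sy (mo k c) t"
  by (rule syI) (auto simp: co_mo)

lemma sy_one: "sy 1 (1, 0)"
  by (rule syI) (auto simp: co_one)

lemma sy_st: "sy p t \<Longrightarrow> u = (fst t, - snd t) \<Longrightarrow> sy (st p) u"
proof (rule syI)
  fix k assume a: "sy p t" "u = (fst t, - snd t)"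
  show "co (st p) k = of_int (fst u) * co (st p) (snd u - k)"
    using sy_co[OF a(1), of "- k"] sy_valid[OF a(1)] a(2) by (auto simp: co_st add.commute)
next
  assume a: "sy p t" "u = (fst t, - snd t)"
  then show "fst u = 1 \<or> fst u = - 1" using sy_valid[OF a(1)] by simp
qed

lemma sy_mult:
  assumes p: "sy p s" and q: "sy q t" and u: "u = type_mult s t"
  shows "sy (p * q) u"
proof -
  obtain e1 c1 where s: "s = (e1, c1)" by (cases s)
  obtain e2 c2 where t: "t = (e2, c2)" by (cases t)
  have e1: "e1 = 1 \<or> e1 = -1" and e2: "e2 = 1 \<or> e2 = -1"
    using sy_valid[OF p] sy_valid[OF q] s t by auto
  have pk: "co p k = of_int e1 * co p (c1 - k)" for k using sy_co[OF p, of k] s by simp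
  have qk: "co q k = of_int e2 * co q (c2 - k)" for k using sy_co[OF q, of k] t by simp
  have mem: "c1 - l \<in> ks p" if "l \<in> ks p" for l
    using that pk[of l] by (auto simp: in_keys_iff)
  have key: "co (p * q) (c1 + c2 - k) = of_int (e1 * e2) * co (p * q) k" for k
  proof -
    have "co (p * q) (c1 + c2 - k) = (\<Sum>l\<in>ks p. co p l * co q (c1 + c2 - k - l))"
      by (rule co_mult_keys)
    also have "\<dots> = (\<Sum>l\<in>ks p. co p (c1 - l) * co q (c1 + c2 - k - (c1 - l)))"
      by (rule sum.reindex_bij_witness[of _ "\<lambda>l. c1 - l" "\<lambda>l. c1 - l"]) (auto intro: mem)
    also have "\<dots> = (\<Sum>l\<in>ks p. of_int (e1 * e2) * (co p l * co q (k - l)))"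
    proof (intro sum.cong refl)
      fix l
      have "co p (c1 - l) = of_int e1 * co p l" using pk[of "c1 - l"] e1 by auto
      moreover have "co q (c1 + c2 - k - (c1 - l)) = of_int e2 * co q (k - l)"
        using qk[of "k - l"] e2 by (auto simp: algebra_simps)
      ultimately show "co p (c1 - l) * co q (c1 + c2 - k - (c1 - l)) = of_int (e1 * e2) * (co p l * co q (k - l))"
        by (simp add: algebra_simps)
    qed
    also have "\<dots> = of_int (e1 * e2) * co (p * q) k"
      by (simp add: co_mult_keys sum_distrib_left)
    finally show ?thesis .
  qed
  have ee: "of_int (e1 * e2) * of_int (e1 * e2) = (1::complex)"
    using e1 e2 by auto
  show ?thesis
  proof (rule syI)
    show "fst u = 1 \<or> fst u = - 1" using e1 e2 by (auto simp: u s t type_mult_def)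
    fix k
    have "of_int (e1 * e2) * co (p * q) (c1 + c2 - k) = co (p * q) k"
      using key[of k] ee by (simp add: mult.assoc[symmetric])
    then show "co (p * q) k = of_int (fst u) * co (p * q) (snd u - k)"
      by (simp add: u s t type_mult_def)
  qed
qed

lemma sy_cmul: "sy p t \<Longrightarrow> sy (mo 0 c * p) t"
  by (rule sy_mult[of _ "(1, 0)"]) (auto intro: sy_mo simp: type_mult_def)

lemma co_mult_top:
  fixes p q :: L
  assumes P: "\<And>k. k > P \<Longrightarrow> co p k = 0" and Q: "\<And>k. k > Q \<Longrightarrow> co q k = 0"
  shows "n > P + Q \<Longrightarrow> co (p * q) n = 0"
    and "co (p * q) (P + Q) = co p P * co q Q"
    and "co (p * q) (P + Q - 1) = co p P * co q (Q - 1) + co p (P - 1) * co q Q"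
proof -
  define S where "S = ks p \<union> {P, P - 1}"
  have fS: "finite S" and pS: "\<And>l. l \<notin> S \<Longrightarrow> co p l = 0"
    by (auto simp: S_def in_keys_iff)
  have expand: "co (p * q) n = (\<Sum>l\<in>S. co p l * co q (n - l))" for n
    by (rule co_mult_sup[OF fS pS])
  have red: "co (p * q) n = (\<Sum>l\<in>{P, P - 1}. co p l * co q (n - l))"
    if "\<And>l. l \<in> S \<Longrightarrow> l \<noteq> P \<Longrightarrow> l \<noteq> P - 1 \<Longrightarrow> co p l * co q (n - l) = 0" for n
    unfolding expand
    by (rule sum.mono_neutral_right) (use fS that in \<open>auto simp: S_def\<close>)
  {
    assume n: "n > P + Q"
    have z: "co p l * co q (n - l) = 0" for l
      using P[of l] Q[of "n - l"] n by (cases "l > P") auto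
    show "co (p * q) n = 0" unfolding expand by (rule sum.neutral) (simp add: z)
  }
  have "co (p * q) (P + Q) = (\<Sum>l\<in>{P, P - 1}. co p l * co q (P + Q - l))"
  proof (rule red)
    fix l assume "l \<noteq> P" "l \<noteq> P - 1"
    then show "co p l * co q (P + Q - l) = 0"
      using P[of l] Q[of "P + Q - l"] by (cases "l > P") auto
  qed
  also have "\<dots> = co p P * co q Q + co p (P - 1) * co q (Q + 1)" by simp
  finally show "co (p * q) (P + Q) = co p P * co q Q" using Q[of "Q + 1"] by simp
  have "co (p * q) (P + Q - 1) = (\<Sum>l\<in>{P, P - 1}. co p l * co q (P + Q - 1 - l))"
  proof (rule red)
    fix l assume "l \<noteq> P" "l \<noteq> P - 1"
    then show "co p l * co q (P + Q - 1 - l) = 0"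
      using P[of l] Q[of "P + Q - 1 - l"] by (cases "l > P") auto
  qed
  also have "\<dots> = co p P * co q (Q - 1) + co p (P - 1) * co q Q" by (simp add: algebra_simps)
  finally show "co (p * q) (P + Q - 1) = co p P * co q (Q - 1) + co p (P - 1) * co q Q" .
qed

definition dg :: "L \<Rightarrow> nat" where "dg p = nat (Max (insert 0 (ks p)))"

lemma dg_M0: "0 \<le> Max (insert 0 (ks p))"
  by (rule Max_ge) auto

lemma dg_int: "int (dg p) = Max (insert 0 (ks p))"
  using dg_M0[of p] by (simp add: dg_def)

lemma dg_bound: "k > int (dg p) \<Longrightarrow> co p k = 0"
proof (rule ccontr)
  assume "k > int (dg p)" "co p k \<noteq> 0"
  then have "k \<in> ks p" by (simp add: in_keys_iff)
  then have "k \<le> Max (insert 0 (ks p))" by (intro Max_ge) auto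
  then show False using \<open>k > int (dg p)\<close> dg_int[of p] by linarith
qed

lemma dg_le: "(\<And>k. k > int N \<Longrightarrow> co p k = 0) \<Longrightarrow> dg p \<le> N"
proof -
  assume H: "\<And>k. k > int N \<Longrightarrow> co p k = 0"
  have "\<forall>a\<in>ks p. a \<le> int N" using H by (meson in_keys_iff not_le)
  then have "Max (insert 0 (ks p)) \<le> int N" by (simp add: Max_le_iff)
  then show "dg p \<le> N" using dg_int[of p] by linarith
qed

lemma sy10_co: "sy p (1, 0) \<Longrightarrow> co p (- k) = co p k"
  using sy_co[of p "(1,0)" k] by simp

lemma dg_top:
  assumes "sy p (1, 0)" "p \<noteq> 0"
  shows "co p (int (dg p)) \<noteq> 0"
proof -
  obtain k where k: "k \<in> ks p" using assms(2) keys_eq_empty by blast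
  have "\<bar>k\<bar> \<in> ks p" using k sy10_co[OF assms(1), of k] by (cases "k \<ge> 0") (auto simp: in_keys_iff)
  have "Max (ks p) \<in> ks p" using k by (intro Max_in) auto
  moreover have "Max (ks p) \<ge> \<bar>k\<bar>" using \<open>\<bar>k\<bar> \<in> ks p\<close> by (intro Max_ge) auto
  moreover have M: "Max (insert 0 (ks p)) = max 0 (Max (ks p))"
    using k by (intro Max_insert) auto
  ultimately have "int (dg p) = Max (ks p)" using dg_int[of p] by simp
  then show ?thesis using \<open>Max (ks p) \<in> ks p\<close> by (simp add: in_keys_iff)
qed

lemma dg_low: "sy p (1, 0) \<Longrightarrow> k < - int (dg p) \<Longrightarrow> co p k = 0"
  using dg_bound[of p "- k"] sy10_co[of p "- k"] by simp

lemma dg0_const: "sy p (1, 0) \<Longrightarrow> dg p = 0 \<Longrightarrow> p = mo 0 (co p 0)"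
proof (rule poly_mapping_eqI)
  fix k assume "sy p (1, 0)" "dg p = 0"
  then show "co p k = co (mo 0 (co p 0)) k"
    using dg_bound[of p k] dg_low[of p k] by (cases k "0::int" rule: linorder_cases) (auto simp: co_mo)
qed

lemma herm_real: "st p = p \<Longrightarrow> sy p (1, 0) \<Longrightarrow> cnj (co p k) = co p k"
proof -
  assume "st p = p" "sy p (1, 0)"
  then have "co p k = cnj (co p (- k))" by (metis co_st)
  then show ?thesis using sy10_co[OF \<open>sy p (1,0)\<close>, of k] by simp
qed


definition HYP :: "L \<Rightarrow> L \<Rightarrow> L \<Rightarrow> symtype \<Rightarrow> real \<Rightarrow> bool" where
  "HYP a b d \<alpha> C \<longleftrightarrow> C < 0 \<and> st a = a \<and> st d = d \<and> sy a (1, 0) \<and> sy d (1, 0) \<and> sy b \<alpha> \<and>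
     a * d - b * st b = mo 0 (of_real C)"

definition FAC :: "L \<Rightarrow> L \<Rightarrow> L \<Rightarrow> symtype \<Rightarrow> bool" where
  "FAC a b d \<alpha> \<longleftrightarrow> (\<exists>u11 u12 u21 u22 s11 s12 s21 s22.
     a = u11 * st u11 - u12 * st u12 \<and> b = u11 * st u21 - u12 * st u22 \<and> d = u21 * st u21 - u22 * st u22 \<and>
     sy u11 s11 \<and> sy u12 s12 \<and> sy u21 s21 \<and> sy u22 s22 \<and>
     type_mult s11 (type_inv s21) = \<alpha> \<and> type_mult s12 (type_inv s22) = \<alpha>)"

lemma FACI:
  assumes "a = u11 * st u11 - u12 * st u12" "b = u11 * st u21 - u12 * st u22" "d = u21 * st u21 - u22 * st u22"
    "sy u11 s11" "sy u12 s12" "sy u21 s21" "sy u22 s22"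
    "type_mult s11 (type_inv s21) = \<alpha>" "type_mult s12 (type_inv s22) = \<alpha>"
  shows "FAC a b d \<alpha>"
  unfolding FAC_def using assms by blast

lemma HYP_swap: "HYP a b d \<alpha> C \<Longrightarrow> HYP d (st b) a (type_star \<alpha>) C"
  unfolding HYP_def
  by (auto simp: st_st type_star_def mult.commute intro: sy_st)

lemma FAC_swap:
  assumes "FAC d (st b) a (type_star \<alpha>)"
  shows "FAC a b d \<alpha>"
proof -
  obtain u11 u12 u21 u22 s11 s12 s21 s22 where
    h: "d = u11 * st u11 - u12 * st u12" "st b = u11 * st u21 - u12 * st u22" "a = u21 * st u21 - u22 * st u22"
    "sy u11 s11" "sy u12 s12" "sy u21 s21" "sy u22 s22"
    "type_mult s11 (type_inv s21) = type_star \<alpha>" "type_mult s12 (type_inv s22) = type_star \<alpha>"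
    using assms unfolding FAC_def by blast
  have b: "b = u21 * st u11 - u22 * st u12"
    using arg_cong[OF h(2), of st] by (simp add: st_simps mult.commute)
  have t: "type_mult s21 (type_inv s11) = \<alpha>" "type_mult s22 (type_inv s12) = \<alpha>"
    using h(8,9) sy_valid[OF h(4)] sy_valid[OF h(5)] sy_valid[OF h(6)] sy_valid[OF h(7)]
    by (auto simp: type_mult_def type_inv_def type_star_def prod_eq_iff mult.commute)
  show ?thesis
    by (rule FACI[OF h(3) b h(1) h(6) h(7) h(4) h(5) t])
qed

lemma HYP_det: "HYP a b d \<alpha> C \<Longrightarrow> n \<noteq> 0 \<Longrightarrow> co (a * d) n = co (b * st b) n"
  unfolding HYP_def
  by (metis co_diff co_mo eq_iff_diff_eq_0)

lemma sy_top:
  assumes "sy b \<alpha>" "b \<noteq> 0"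
  shows "\<exists>hi. co b hi \<noteq> 0 \<and> (\<forall>k>hi. co b k = 0) \<and> (\<forall>k<snd \<alpha> - hi. co b k = 0)"
proof -
  define hi where "hi = Max (ks b)"
  have ne: "ks b \<noteq> {}" using assms(2) keys_eq_empty by blast
  have 1: "co b hi \<noteq> 0" unfolding hi_def using Max_in[OF finite_keys ne] by (simp add: in_keys_iff)
  have 2: "co b k = 0" if "k > hi" for k
  proof (rule ccontr)
    assume "co b k \<noteq> 0"
    then have "k \<le> hi" unfolding hi_def by (intro Max_ge) (auto simp: in_keys_iff)
    then show False using that by simp
  qed
  have 3: "co b k = 0" if "k < snd \<alpha> - hi" for k
    using sy_co[OF assms(1), of k] 2[of "snd \<alpha> - k"] that by simp
  show ?thesis using 1 2 3 by blast
qed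

lemma bst_top:
  assumes "\<forall>k>hi. co b k = 0" "\<forall>k<m - hi. co b k = 0"
  shows "n > 2 * hi - m \<Longrightarrow> co (b * st b) n = 0"
    and "co (b * st b) (2 * hi - m) = co b hi * cnj (co b (m - hi))"
    and "co (b * st b) (2 * hi - m - 1) = co b hi * cnj (co b (m - hi + 1)) + co b (hi - 1) * cnj (co b (m - hi))"
proof -
  have P: "\<And>k. k > hi \<Longrightarrow> co b k = 0" using assms(1) by blast
  have Q: "\<And>k. k > hi - m \<Longrightarrow> co (st b) k = 0" using assms(2) by (simp add: co_st)
  have T1: "n > hi + (hi - m) \<Longrightarrow> co (b * st b) n = 0" for n
    by (rule co_mult_top(1)[of hi b "hi - m" "st b"]) (use P Q in auto)
  have T2: "co (b * st b) (hi + (hi - m)) = co b hi * co (st b) (hi - m)"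
    by (rule co_mult_top(2)[of hi b "hi - m" "st b"]) (use P Q in auto)
  have T3: "co (b * st b) (hi + (hi - m) - 1) = co b hi * co (st b) (hi - m - 1) + co b (hi - 1) * co (st b) (hi - m)"
    by (rule co_mult_top(3)[of hi b "hi - m" "st b"]) (use P Q in auto)
  show "n > 2 * hi - m \<Longrightarrow> co (b * st b) n = 0" using T1[of n] by simp
  show "co (b * st b) (2 * hi - m) = co b hi * cnj (co b (m - hi))"
    using T2 by (simp add: co_st algebra_simps)
  show "co (b * st b) (2 * hi - m - 1) = co b hi * cnj (co b (m - hi + 1)) + co b (hi - 1) * cnj (co b (m - hi))"
    using T3 by (simp add: co_st algebra_simps)
qed

lemma ad_top:
  assumes "sy a (1, 0)" "sy d (1, 0)"
  shows "n > int (dg a) + int (dg d) \<Longrightarrow> co (a * d) n = 0"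
    and "co (a * d) (int (dg a) + int (dg d)) = co a (dg a) * co d (dg d)"
    and "co (a * d) (int (dg a) + int (dg d) - 1) = co a (dg a) * co d (int (dg d) - 1) + co a (int (dg a) - 1) * co d (dg d)"
  using co_mult_top[of "int (dg a)" a "int (dg d)" d, OF dg_bound dg_bound] by auto

lemma dg_zero: "dg 0 = 0"
  by (simp add: dg_def)

lemma span:
  assumes H: "HYP a b d \<alpha> C" and pa: "dg a \<ge> 1" and pd: "dg d \<ge> 1"
  shows "\<exists>hi. co b hi \<noteq> 0 \<and> (\<forall>k>hi. co b k = 0) \<and> (\<forall>k<snd \<alpha> - hi. co b k = 0) \<and>
           2 * hi - snd \<alpha> = int (dg a) + int (dg d)"
proof -
  have sa: "sy a (1,0)" and sd: "sy d (1,0)" and sb: "sy b \<alpha>" using H by (auto simp: HYP_def)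
  have "a \<noteq> 0" "d \<noteq> 0" using pa pd dg_zero by auto
  then have top: "co (a * d) (int (dg a) + int (dg d)) \<noteq> 0"
    using ad_top(2)[OF sa sd] dg_top[OF sa] dg_top[OF sd] by simp
  have "b \<noteq> 0"
  proof
    assume "b = 0"
    then have "co (a * d) (int (dg a) + int (dg d)) = 0"
      using HYP_det[OF H, of "int (dg a) + int (dg d)"] pa by simp
    then show False using top by simp
  qed
  then obtain hi where h: "co b hi \<noteq> 0" "\<forall>k>hi. co b k = 0" "\<forall>k<snd \<alpha> - hi. co b k = 0"
    using sy_top[OF sb] by blast
  note BT = bst_top[OF h(2) h(3)]
  have lo: "co b (snd \<alpha> - hi) \<noteq> 0"
    using sy_co[OF sb, of hi] h(1) by auto
  have "2 * hi - snd \<alpha> = int (dg a) + int (dg d)"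
  proof (rule ccontr)
    assume ne: "2 * hi - snd \<alpha> \<noteq> int (dg a) + int (dg d)"
    show False
    proof (cases "2 * hi - snd \<alpha> > int (dg a) + int (dg d)")
      case True
      then have "co (a * d) (2 * hi - snd \<alpha>) = 0" using ad_top(1)[OF sa sd] by blast
      moreover have "co (b * st b) (2 * hi - snd \<alpha>) \<noteq> 0" using BT(2) h(1) lo by simp
      moreover have "2 * hi - snd \<alpha> \<noteq> 0" using True pa by linarith
      ultimately show False using HYP_det[OF H] by metis
    next
      case False
      then have "co (b * st b) (int (dg a) + int (dg d)) = 0" using BT(1) ne by simp
      moreover have "int (dg a) + int (dg d) \<noteq> 0" using pa by linarith
      ultimately show False using HYP_det[OF H] top by metis
    qed
  qed
  then show ?thesis using h by blast
qed

lemma num_mo: "(numeral n::L) * mo 0 (1 / numeral n) = 1"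
proof -
  have "(numeral n::L) * mo 0 (1 / numeral n) = mo 0 (numeral n) * mo 0 (1 / numeral n)" by simp
  also have "\<dots> = mo 0 1" by (simp only: mo_mult) simp
  finally show ?thesis by simp
qed

lemmas four_mo = num_mo[of "num.Bit0 (num.Bit0 num.One)", simplified]
lemmas two_mo = num_mo[of "num.Bit0 num.One", simplified]

lemma mo_uminus_0: "mo k (- x) = - mo k x"
  by (simp add: single_uminus)

lemma mo_real_st: "st (mo 0 (complex_of_real r)) = mo 0 (complex_of_real r)"
  by (simp add: st_mo)

lemma base:
  assumes H: "HYP a b d \<alpha> C" and d0: "dg d = 0"
  shows "FAC a b d \<alpha>"
proof -
  have C: "C < 0" and sa: "st a = a" and sd: "st d = d" and ya: "sy a (1,0)" and yd: "sy d (1,0)"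
    and yb: "sy b \<alpha>" and det: "a * d - b * st b = mo 0 (of_real C)"
    using H by (auto simp: HYP_def)
  have va: "fst \<alpha> = 1 \<or> fst \<alpha> = -1" using sy_valid[OF yb] .
  define r where "r = Re (co d 0)"
  have "cnj (co d 0) = co d 0" by (rule herm_real[OF sd yd])
  then have "co d 0 = of_real r" unfolding r_def by (metis Reals_cnj_iff of_real_Re)
  then have dr: "d = mo 0 (of_real r)" using dg0_const[OF yd d0] by simp
  have ti: "type_mult (1, 0) (type_inv (type_inv \<alpha>)) = \<alpha>" "type_mult \<alpha> (type_inv (1, 0)) = \<alpha>"
    by (auto simp: type_mult_def type_inv_def)
  have cm: "mo 0 x * mo 0 y = mo 0 (x * y)" for x y by (simp add: mo_mult)
  have bb: "b * st b = a * mo 0 (of_real r) - mo 0 (of_real C)" using det dr by (simp add: algebra_simps)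
  have one: "mo 0 1 = (1::L)" by simp
  have inv: "mo 0 (complex_of_real (1 / r)) * (a * mo 0 (complex_of_real r)) = a" if "r \<noteq> 0"
  proof -
    have "mo 0 (complex_of_real (1 / r)) * (a * mo 0 (complex_of_real r)) = a * (mo 0 (complex_of_real (1 / r)) * mo 0 (complex_of_real r))"
      by (simp add: algebra_simps)
    also have "\<dots> = a" using that by (simp add: cm flip: of_real_mult)
    finally show ?thesis .
  qed
  have stc: "st (mo 0 (complex_of_real x)) = mo 0 (complex_of_real x)" for x by (simp add: st_mo)
  consider "r < 0" | "r > 0" | "r = 0" by linarith
  then show ?thesis
  proof cases
    case 1
    define c1 where "c1 = sqrt (C / r)"
    define c2 where "c2 = - 1 / sqrt (- r)"
    define c3 where "c3 = sqrt (- r)"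
    define u11 where "u11 = mo 0 (complex_of_real c1)"
    define u12 where "u12 = mo 0 (complex_of_real c2) * b"
    define u22 where "u22 = mo 0 (complex_of_real c3)"
    have s1: "c1 * c1 = C / r" using 1 C unfolding c1_def by (simp add: divide_neg_neg)
    have s2: "c2 * c2 = - (1 / r)" using 1 unfolding c2_def by (simp add: divide_simps)
    have s3: "c2 * c3 = - 1" using 1 unfolding c2_def c3_def by simp
    have s4: "c3 * c3 = - r" using 1 unfolding c3_def by simp
    have e1: "u11 * st u11 = mo 0 (complex_of_real (C / r))"
      unfolding u11_def stc cm by (simp flip: of_real_mult add: s1)
    have e2: "u12 * st u12 = mo 0 (complex_of_real (- (1 / r))) * (b * st b)"
    proof -
      have "u12 * st u12 = (mo 0 (complex_of_real c2) * mo 0 (complex_of_real c2)) * (b * st b)"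
        unfolding u12_def st_mult stc by (simp add: algebra_simps)
      then show ?thesis unfolding cm by (simp flip: of_real_mult add: s2)
    qed
    have "u11 * st u11 - u12 * st u12 = mo 0 (complex_of_real (C / r)) + mo 0 (complex_of_real (1 / r)) * (a * mo 0 (complex_of_real r)) - mo 0 (complex_of_real (1 / r)) * mo 0 (complex_of_real C)"
      unfolding e1 e2 bb by (simp add: algebra_simps mo_uminus_0)
    also have "\<dots> = a" using 1 by (simp add: inv cm flip: of_real_mult)
    finally have ea: "a = u11 * st u11 - u12 * st u12" ..
    have eb: "b = u11 * st 0 - u12 * st u22"
    proof -
      have "u11 * st 0 - u12 * st u22 = - ((mo 0 (complex_of_real c2) * mo 0 (complex_of_real c3)) * b)"
        unfolding u12_def u22_def stc by (simp add: st_zero algebra_simps)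
      then show ?thesis unfolding cm by (simp flip: of_real_mult add: s3 mo_uminus_0)
    qed
    have ed: "d = 0 * st 0 - u22 * st u22"
      unfolding u22_def dr stc cm by (simp flip: of_real_mult add: s4 mo_uminus_0)
    show ?thesis
      by (rule FACI[OF ea eb ed, of "(1,0)" \<alpha> "type_inv \<alpha>" "(1,0)"])
        (use va in \<open>auto simp: u11_def u12_def u22_def intro!: sy_mo sy_cmul yb sy_zero ti simp: type_inv_def type_mult_def\<close>)
  next
    case 2
    define c1 where "c1 = 1 / sqrt r"
    define c2 where "c2 = sqrt (- C / r)"
    define c3 where "c3 = sqrt r"
    define u11 where "u11 = mo 0 (complex_of_real c1) * b"
    define u12 where "u12 = mo 0 (complex_of_real c2)"
    define u21 where "u21 = mo 0 (complex_of_real c3)"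
    have s1: "c1 * c1 = 1 / r" using 2 unfolding c1_def by (simp add: divide_simps)
    have s2: "c2 * c2 = - C / r" using 2 C unfolding c2_def by simp
    have s3: "c1 * c3 = 1" using 2 unfolding c1_def c3_def by simp
    have s4: "c3 * c3 = r" using 2 unfolding c3_def by simp
    have e1: "u12 * st u12 = mo 0 (complex_of_real (- C / r))"
      unfolding u12_def stc cm by (simp flip: of_real_mult add: s2)
    have e2: "u11 * st u11 = mo 0 (complex_of_real (1 / r)) * (b * st b)"
    proof -
      have "u11 * st u11 = (mo 0 (complex_of_real c1) * mo 0 (complex_of_real c1)) * (b * st b)"
        unfolding u11_def st_mult stc by (simp add: algebra_simps)
      then show ?thesis unfolding cm by (simp flip: of_real_mult add: s1)
    qed
    have "u11 * st u11 - u12 * st u12 = mo 0 (complex_of_real (1 / r)) * (a * mo 0 (complex_of_real r)) - mo 0 (complex_of_real (1 / r)) * mo 0 (complex_of_real C) + mo 0 (complex_of_real (C / r))"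
      unfolding e1 e2 bb by (simp add: algebra_simps mo_uminus_0)
    also have "\<dots> = a" using 2 by (simp add: inv cm flip: of_real_mult)
    finally have ea: "a = u11 * st u11 - u12 * st u12" ..
    have eb: "b = u11 * st u21 - u12 * st 0"
    proof -
      have "u11 * st u21 - u12 * st 0 = (mo 0 (complex_of_real c1) * mo 0 (complex_of_real c3)) * b"
        unfolding u11_def u21_def stc by (simp add: st_zero algebra_simps)
      then show ?thesis unfolding cm by (simp flip: of_real_mult add: s3)
    qed
    have ed: "d = u21 * st u21 - 0 * st 0"
      unfolding u21_def dr stc cm by (simp flip: of_real_mult add: s4)
    show ?thesis
      by (rule FACI[OF ea eb ed, of \<alpha> "(1,0)" "(1,0)" "type_inv \<alpha>"])
        (use va in \<open>auto simp: u11_def u12_def u21_def intro!: sy_mo sy_cmul yb sy_zero ti simp: type_inv_def type_mult_def\<close>)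
  next
    case 3
    define u11 where "u11 = mo 0 (1 / 2) * (a + 1)"
    define u12 where "u12 = mo 0 (1 / 2) * (a - 1)"
    have ea: "a = u11 * st u11 - u12 * st u12"
      unfolding u11_def u12_def
      by (simp add: st_simps sa algebra_simps cm) (simp add: cm[symmetric] four_mo flip: mult.assoc)
    have "u11 - u12 = 2 * mo 0 (1 / 2)" unfolding u11_def u12_def by (simp add: algebra_simps)
    then have u1: "u11 - u12 = 1" using num_mo[of "num.Bit0 num.One"] by simp
    have eb: "b = u11 * st (st b) - u12 * st (st b)"
      by (simp add: st_st u1 flip: left_diff_distrib)
    have ed: "d = st b * st (st b) - st b * st (st b)" using dr 3 by simp
    have ysb: "sy (st b) (fst \<alpha>, - snd \<alpha>)" by (rule sy_st[OF yb]) simp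
    have t: "type_mult (1, 0) (type_inv (fst \<alpha>, - snd \<alpha>)) = \<alpha>"
      by (simp add: type_mult_def type_inv_def)
    show ?thesis
      by (rule FACI[OF ea eb ed _ _ ysb ysb t t])
        (auto simp: u11_def u12_def intro!: sy_cmul sy_add sy_diff ya sy_one)
  qed
qed


lemma tm_back:
  assumes "fst s = 1 \<or> fst s = -1" "type_mult t (type_inv s) = \<alpha>"
  shows "type_mult \<alpha> s = t"
  using assms by (cases s; cases t) (auto simp: type_mult_def type_inv_def)

lemma co_fd: "co ((mo j x + mo l y) * d) k = x * co d (k - j) + y * co d (k - l)"
  by (simp add: distrib_right co_add co_mo_mult)

lemma tri:
  assumes H: "HYP a b d \<alpha> C" and pd: "1 \<le> dg d" and le: "dg d \<le> dg a"
    and np: "\<not> (dg a = dg d \<and> fst \<alpha> = -1)"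
  shows "\<exists>a' b'. HYP a' b' d \<alpha> C \<and> dg a' < dg a \<and> (FAC a' b' d \<alpha> \<longrightarrow> FAC a b d \<alpha>)"
proof -
  have C: "C < 0" and sa: "st a = a" and sd: "st d = d" and ya: "sy a (1,0)" and yd: "sy d (1,0)"
    and yb: "sy b \<alpha>" and det: "a * d - b * st b = mo 0 (of_real C)"
    using H by (auto simp: HYP_def)
  obtain e m where al: "\<alpha> = (e, m)" by (cases \<alpha>)
  have va: "e = 1 \<or> e = -1" using sy_valid[OF yb] al by simp
  have ee: "of_int e * of_int e = (1::complex)" using va by auto
  have eei: "e * e = 1" using va by auto
  define p where "p = int (dg a)"
  define q where "q = int (dg d)"
  have pq: "1 \<le> q" "q \<le> p" using pd le by (auto simp: p_def q_def)
  obtain hi where h: "co b hi \<noteq> 0" "\<forall>k>hi. co b k = 0" "\<forall>k<m - hi. co b k = 0" "2 * hi - m = p + q"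
    using span[OF H _ pd] pd le al p_def q_def by fastforce
  have "d \<noteq> 0" using pd dg_zero by auto
  then have Dq: "co d q \<noteq> 0" using dg_top[OF yd] q_def by simp
  have dq: "co d k = 0" if "k > q" for k using dg_bound that q_def by simp
  define j where "j = hi - q"
  define \<kappa> where "\<kappa> = - co b hi / (co d q * (if p = q then 2 else 1))"
  define f where "f = mo j \<kappa> + mo (m - j) (of_int e * \<kappa>)"
  have yf: "sy f \<alpha>"
  proof (rule syI)
    show "fst \<alpha> = 1 \<or> fst \<alpha> = -1" using va al by simp
    fix k
    show "co f k = of_int (fst \<alpha>) * co f (snd \<alpha> - k)"
      using ee by (auto simp: f_def co_add co_mo al algebra_simps)
  qed
  define b' where "b' = b + f * d"
  define a' where "a' = a + f * st b + b * st f + f * d * st f"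
  have tst: "type_mult \<alpha> (e, - m) = (1, 0)" "type_mult (e, - m) \<alpha> = (1, 0)"
    using va by (auto simp: al type_mult_def)
  have ysb: "sy (st b) (e, - m)" by (rule sy_st[OF yb]) (simp add: al)
  have ysf: "sy (st f) (e, - m)" by (rule sy_st[OF yf]) (simp add: al)
  have ya': "sy a' (1, 0)"
    unfolding a'_def
    by (intro sy_add sy_mult[OF yf ysb] sy_mult[OF yb ysf] ya sy_mult[OF sy_mult[OF yf yd] ysf])
       (auto simp: tst type_mult_def al eei)
  have yb': "sy b' \<alpha>" unfolding b'_def
    by (intro sy_add yb sy_mult[OF yf yd]) (simp add: type_mult_def al)
  have sa': "st a' = a'" unfolding a'_def by (simp add: st_simps sa sd algebra_simps)
  have det': "a' * d - b' * st b' = mo 0 (of_real C)"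
    unfolding det[symmetric] a'_def b'_def by (simp add: st_simps sd algebra_simps)
  have H': "HYP a' b' d \<alpha> C" using C sa' sd ya' yd yb' det' by (simp add: HYP_def)
  have cb': "co b' k = co b k + \<kappa> * co d (k - j) + of_int e * \<kappa> * co d (k - (m - j))" for k
    unfolding b'_def f_def by (simp add: co_add co_fd)
  have top0: "co b' k = 0" if "k \<ge> hi" for k
  proof (cases "k = hi")
    case True
    have idx: "hi - (m - j) = p" using h(4) by (simp add: j_def)
    have "co d (hi - (m - j)) = (if p = q then co d q else 0)"
      unfolding idx using dq[of p] pq by auto
    moreover have "p = q \<Longrightarrow> e = 1" using np va p_def q_def al by auto
    ultimately show ?thesis using True Dq
      by (simp add: cb' j_def \<kappa>_def field_simps split: if_splits)
  next
    case False
    then have "k > hi" using that by simp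
    then show ?thesis
      using h(2) dq[of "k - j"] dq[of "k - (m - j)"] pq h(4) by (simp add: cb' j_def)
  qed
  have low0: "co b' k = 0" if "k < m - (hi - 1)" for k
    using sy_co[OF yb', of k] top0[of "m - k"] that al by simp
  have dga': "dg a' < dg a"
  proof (rule ccontr)
    assume "\<not> dg a' < dg a"
    then have ge: "int (dg a') \<ge> p" by (simp add: p_def)
    then have "a' \<noteq> 0" using pq dg_zero by auto
    then have "co (a' * d) (int (dg a') + int (dg d)) \<noteq> 0"
      using ad_top(2)[OF ya' yd] dg_top[OF ya'] dg_top[OF yd] \<open>d \<noteq> 0\<close> by simp
    moreover have "co (b' * st b') (int (dg a') + int (dg d)) = 0"
      by (rule bst_top(1)[of "hi - 1" b' m]) (use top0 low0 ge h(4) q_def in auto)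
    moreover have "int (dg a') + int (dg d) \<noteq> 0" using ge pq q_def by linarith
    ultimately show False using HYP_det[OF H'] by metis
  qed
  have lift: "FAC a b d \<alpha>" if F: "FAC a' b' d \<alpha>"
  proof -
    obtain u11 u12 u21 u22 s11 s12 s21 s22 where
      u: "a' = u11 * st u11 - u12 * st u12" "b' = u11 * st u21 - u12 * st u22" "d = u21 * st u21 - u22 * st u22"
      "sy u11 s11" "sy u12 s12" "sy u21 s21" "sy u22 s22"
      "type_mult s11 (type_inv s21) = \<alpha>" "type_mult s12 (type_inv s22) = \<alpha>"
      using F unfolding FAC_def by blast
    have sb': "st b' = u21 * st u11 - u22 * st u12" using arg_cong[OF u(2), of st]
      by (simp add: st_simps mult.commute)
    have "(u11 - f * u21) * st (u11 - f * u21) - (u12 - f * u22) * st (u12 - f * u22)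
        = (u11 * st u11 - u12 * st u12) - f * (u21 * st u11 - u22 * st u12) - (u11 * st u21 - u12 * st u22) * st f
          + f * (u21 * st u21 - u22 * st u22) * st f"
      by (simp add: st_simps algebra_simps)
    also have "\<dots> = a' - f * st b' - b' * st f + f * d * st f" by (simp only: u(1,3) u(2)[symmetric] sb'[symmetric])
    also have "\<dots> = a" by (simp add: a'_def b'_def st_simps sd algebra_simps)
    finally have ea: "a = (u11 - f * u21) * st (u11 - f * u21) - (u12 - f * u22) * st (u12 - f * u22)" ..
    have "(u11 - f * u21) * st u21 - (u12 - f * u22) * st u22 = (u11 * st u21 - u12 * st u22) - f * (u21 * st u21 - u22 * st u22)"
      by (simp add: algebra_simps)
    also have "\<dots> = b" by (simp only: u(2)[symmetric] u(3)[symmetric]) (simp add: b'_def)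
    finally have eb: "b = (u11 - f * u21) * st u21 - (u12 - f * u22) * st u22" ..
    have t1: "type_mult \<alpha> s21 = s11" by (rule tm_back[OF sy_valid[OF u(6)] u(8)])
    have t2: "type_mult \<alpha> s22 = s12" by (rule tm_back[OF sy_valid[OF u(7)] u(9)])
    show ?thesis
      by (rule FACI[OF ea eb u(3) sy_diff[OF u(4) sy_mult[OF yf u(6) t1[symmetric]]]
            sy_diff[OF u(5) sy_mult[OF yf u(7) t2[symmetric]]] u(6) u(7) u(8) u(9)])
  qed
  show ?thesis using H' dga' lift by blast
qed


lemma det_abs:
  fixes a b bs d e11 e12 e21 e22 s11 s12 s21 s22 :: "'a::comm_ring_1"
  shows "(e11 * a * s11 + e11 * b * s12 + e12 * bs * s11 + e12 * d * s12) * (e21 * a * s21 + e21 * b * s22 + e22 * bs * s21 + e22 * d * s22)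
       - (e11 * a * s21 + e11 * b * s22 + e12 * bs * s21 + e12 * d * s22) * (e21 * a * s11 + e21 * b * s12 + e22 * bs * s11 + e22 * d * s12)
       = (e11 * e22 - e12 * e21) * (s11 * s22 - s12 * s21) * (a * d - b * bs)"
  by (simp add: algebra_simps)

lemma lift_abs:
  fixes a b bs d e11 e12 e21 e22 s11 s12 s21 s22 g sg v11 v12 v21 v22 w11 w12 w21 w22 :: "'a::comm_ring_1"
  assumes h1: "e11 * a * s11 + e11 * b * s12 + e12 * bs * s11 + e12 * d * s12 = v11 * w11 - v12 * w12"
    and h2: "e11 * a * s21 + e11 * b * s22 + e12 * bs * s21 + e12 * d * s22 = v11 * w21 - v12 * w22"
    and h3: "e21 * a * s11 + e21 * b * s12 + e22 * bs * s11 + e22 * d * s12 = v21 * w11 - v22 * w12"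
    and h4: "e21 * a * s21 + e21 * b * s22 + e22 * bs * s21 + e22 * d * s22 = v21 * w21 - v22 * w22"
    and g: "g * (e11 * e22 - e12 * e21) = 1" and sg: "sg * (s11 * s22 - s12 * s21) = 1"
  shows "a = (g * e22 * v11 - g * e12 * v21) * (sg * s22 * w11 - sg * s12 * w21) - (g * e22 * v12 - g * e12 * v22) * (sg * s22 * w12 - sg * s12 * w22)"
    and "b = (g * e22 * v11 - g * e12 * v21) * (sg * s11 * w21 - sg * s21 * w11) - (g * e22 * v12 - g * e12 * v22) * (sg * s11 * w22 - sg * s21 * w12)"
    and "d = (g * e11 * v21 - g * e21 * v11) * (sg * s11 * w21 - sg * s21 * w11) - (g * e11 * v22 - g * e21 * v12) * (sg * s11 * w22 - sg * s21 * w12)"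
proof -
  have "(g * e22 * v11 - g * e12 * v21) * (sg * s22 * w11 - sg * s12 * w21) - (g * e22 * v12 - g * e12 * v22) * (sg * s22 * w12 - sg * s12 * w22)
     = g * sg * (e22 * s22 * (v11 * w11 - v12 * w12) - e22 * s12 * (v11 * w21 - v12 * w22) - e12 * s22 * (v21 * w11 - v22 * w12) + e12 * s12 * (v21 * w21 - v22 * w22))"
    by (simp add: algebra_simps)
  also have "\<dots> = g * sg * (e22 * s22 * (e11 * a * s11 + e11 * b * s12 + e12 * bs * s11 + e12 * d * s12) - e22 * s12 * (e11 * a * s21 + e11 * b * s22 + e12 * bs * s21 + e12 * d * s22)
       - e12 * s22 * (e21 * a * s11 + e21 * b * s12 + e22 * bs * s11 + e22 * d * s12) + e12 * s12 * (e21 * a * s21 + e21 * b * s22 + e22 * bs * s21 + e22 * d * s22))"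
    by (simp only: h1 h2 h3 h4)
  also have "\<dots> = (g * (e11 * e22 - e12 * e21)) * (sg * (s11 * s22 - s12 * s21)) * a"
    by (simp add: algebra_simps)
  finally show "a = (g * e22 * v11 - g * e12 * v21) * (sg * s22 * w11 - sg * s12 * w21) - (g * e22 * v12 - g * e12 * v22) * (sg * s22 * w12 - sg * s12 * w22)"
    by (simp add: g sg)
next
  have "(g * e22 * v11 - g * e12 * v21) * (sg * s11 * w21 - sg * s21 * w11) - (g * e22 * v12 - g * e12 * v22) * (sg * s11 * w22 - sg * s21 * w12)
     = g * sg * (e22 * s11 * (v11 * w21 - v12 * w22) - e22 * s21 * (v11 * w11 - v12 * w12) - e12 * s11 * (v21 * w21 - v22 * w22) + e12 * s21 * (v21 * w11 - v22 * w12))"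
    by (simp add: algebra_simps)
  also have "\<dots> = g * sg * (e22 * s11 * (e11 * a * s21 + e11 * b * s22 + e12 * bs * s21 + e12 * d * s22) - e22 * s21 * (e11 * a * s11 + e11 * b * s12 + e12 * bs * s11 + e12 * d * s12)
       - e12 * s11 * (e21 * a * s21 + e21 * b * s22 + e22 * bs * s21 + e22 * d * s22) + e12 * s21 * (e21 * a * s11 + e21 * b * s12 + e22 * bs * s11 + e22 * d * s12))"
    by (simp only: h1 h2 h3 h4)
  also have "\<dots> = (g * (e11 * e22 - e12 * e21)) * (sg * (s11 * s22 - s12 * s21)) * b"
    by (simp add: algebra_simps)
  finally show "b = (g * e22 * v11 - g * e12 * v21) * (sg * s11 * w21 - sg * s21 * w11) - (g * e22 * v12 - g * e12 * v22) * (sg * s11 * w22 - sg * s21 * w12)"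
    by (simp add: g sg)
next
  have "(g * e11 * v21 - g * e21 * v11) * (sg * s11 * w21 - sg * s21 * w11) - (g * e11 * v22 - g * e21 * v12) * (sg * s11 * w22 - sg * s21 * w12)
     = g * sg * (e11 * s11 * (v21 * w21 - v22 * w22) - e11 * s21 * (v21 * w11 - v22 * w12) - e21 * s11 * (v11 * w21 - v12 * w22) + e21 * s21 * (v11 * w11 - v12 * w12))"
    by (simp add: algebra_simps)
  also have "\<dots> = g * sg * (e11 * s11 * (e21 * a * s21 + e21 * b * s22 + e22 * bs * s21 + e22 * d * s22) - e11 * s21 * (e21 * a * s11 + e21 * b * s12 + e22 * bs * s11 + e22 * d * s12)
       - e21 * s11 * (e11 * a * s21 + e11 * b * s22 + e12 * bs * s21 + e12 * d * s22) + e21 * s21 * (e11 * a * s11 + e11 * b * s12 + e12 * bs * s11 + e12 * d * s12))"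
    by (simp only: h1 h2 h3 h4)
  also have "\<dots> = (g * (e11 * e22 - e12 * e21)) * (sg * (s11 * s22 - s12 * s21)) * d"
    by (simp add: algebra_simps)
  finally show "d = (g * e11 * v21 - g * e21 * v11) * (sg * s11 * w21 - sg * s21 * w11) - (g * e11 * v22 - g * e21 * v12) * (sg * s11 * w22 - sg * s21 * w12)"
    by (simp add: g sg)
qed

lemma expand_a_abs:
  fixes a b bs d z zi M Mc T :: "'a::comm_ring_1"
  assumes zz: "z * zi = 1" and mm: "M * Mc = T"
  shows "(1 + z) * a * (1 + zi) + (1 + z) * b * (Mc * (1 - zi)) + M * (1 - z) * bs * (1 + zi) + M * (1 - z) * d * (Mc * (1 - zi))
    = a + a + z * a + zi * a + Mc * (z * b) - Mc * (zi * b) + M * (zi * bs) - M * (z * bs) + T * d + T * d - T * (z * d) - T * (zi * d)"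
proof -
  have "(1 + z) * a * (1 + zi) + (1 + z) * b * (Mc * (1 - zi)) + M * (1 - z) * bs * (1 + zi) + M * (1 - z) * d * (Mc * (1 - zi))
    = a * (1 + z + zi + z * zi) + Mc * b * (z - zi + 1 - z * zi) + M * bs * (1 + zi - z - z * zi) + (M * Mc) * d * (1 - z - zi + z * zi)"
    by (simp add: algebra_simps)
  also have "\<dots> = a * (1 + z + zi + 1) + Mc * b * (z - zi + 1 - 1) + M * bs * (1 + zi - z - 1) + T * d * (1 - z - zi + 1)"
    by (simp only: zz mm)
  also have "\<dots> = a + a + z * a + zi * a + Mc * (z * b) - Mc * (zi * b) + M * (zi * bs) - M * (z * bs) + T * d + T * d - T * (z * d) - T * (zi * d)"
    by (simp add: algebra_simps)
  finally show ?thesis .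
qed

lemma expand_d_abs:
  fixes a b bs d z zi M Mc T :: "'a::comm_ring_1"
  assumes zz: "z * zi = 1" and mm: "M * Mc = T"
  shows "(1 - z) * a * (1 - zi) + (1 - z) * b * (Mc * (1 + zi)) + M * (1 + z) * bs * (1 - zi) + M * (1 + z) * d * (Mc * (1 + zi))
    = a + a - z * a - zi * a + Mc * (zi * b) - Mc * (z * b) + M * (z * bs) - M * (zi * bs) + T * d + T * d + T * (z * d) + T * (zi * d)"
proof -
  have "(1 - z) * a * (1 - zi) + (1 - z) * b * (Mc * (1 + zi)) + M * (1 + z) * bs * (1 - zi) + M * (1 + z) * d * (Mc * (1 + zi))
    = a * (1 - z - zi + z * zi) + Mc * b * (1 + zi - z - z * zi) + M * bs * (1 - zi + z - z * zi) + (M * Mc) * d * (1 + z + zi + z * zi)"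
    by (simp add: algebra_simps)
  also have "\<dots> = a * (1 - z - zi + 1) + Mc * b * (1 + zi - z - 1) + M * bs * (1 - zi + z - 1) + T * d * (1 + z + zi + 1)"
    by (simp only: zz mm)
  also have "\<dots> = a + a - z * a - zi * a + Mc * (zi * b) - Mc * (z * b) + M * (z * bs) - M * (zi * bs) + T * d + T * d + T * (z * d) + T * (zi * d)"
    by (simp add: algebra_simps)
  finally show ?thesis .
qed


lemma sy_mult3: "sy p s \<Longrightarrow> sy q t \<Longrightarrow> sy r w \<Longrightarrow> u = type_mult (type_mult s t) w \<Longrightarrow> sy (p * q * r) u"
  by (rule sy_mult[OF sy_mult]) auto

lemma syZ1: "sy (1 + mo 1 1) (1, 1)"
  by (rule syI) (auto simp: co_add co_one co_mo)
lemma syZ2: "sy (1 - mo 1 1) (-1, 1)"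
  by (rule syI) (auto simp: co_diff co_one co_mo)

lemma estep:
  assumes H: "HYP a b d \<alpha> C" and pd: "1 \<le> dg d" and eq: "dg a = dg d" and ne: "fst \<alpha> = -1"
  shows "\<exists>a' b' d' \<alpha>' C'. HYP a' b' d' \<alpha>' C' \<and> dg a' + dg d' < dg a + dg d \<and> (FAC a' b' d' \<alpha>' \<longrightarrow> FAC a b d \<alpha>)"
proof -
  have C: "C < 0" and sa: "st a = a" and sd: "st d = d" and ya: "sy a (1,0)" and yd: "sy d (1,0)"
    and yb: "sy b \<alpha>" and det: "a * d - b * st b = mo 0 (of_real C)"
    using H by (auto simp: HYP_def)
  obtain m where al: "\<alpha> = (-1, m)" using ne by (cases \<alpha>) auto
  define p where "p = int (dg a)"
  have pq: "int (dg d) = p" "1 \<le> p" using eq pd by (auto simp: p_def)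
  obtain hi where h: "co b hi \<noteq> 0" "\<forall>k>hi. co b k = 0" "\<forall>k<m - hi. co b k = 0" "2 * hi - m = p + p"
    using span[OF H _ pd] pd eq al p_def by fastforce
  define h where "h = hi - p"
  have m2: "m = 2 * h" and hi: "hi = h + p" using h(4) by (auto simp: h_def)
  have bsym: "co b k = - co b (m - k)" for k using sy_co[OF yb, of k] al by simp
  have az: "co a k = 0" if "k > p" for k using dg_bound[of a k] that p_def by simp
  have dz: "co d k = 0" if "k > p" for k using dg_bound[of d k] that pq by simp
  have bz: "co b k = 0" if "k > h + p" for k using h(2) that hi by simp
  have bl: "co b k = 0" if "k < h - p" for k using h(3) that hi m2 by simp
  define B where "B = co b (h + p)"
  define B1 where "B1 = co b (h + p - 1)"
  define x where "x = co a p"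
  define Dp where "Dp = co d p"
  define a1 where "a1 = co a (p - 1)"
  define d1 where "d1 = co d (p - 1)"
  have "a \<noteq> 0" "d \<noteq> 0" using pd eq dg_zero by auto
  then have x0: "x \<noteq> 0" and D0: "Dp \<noteq> 0" using dg_top[OF ya] dg_top[OF yd] pq by (auto simp: x_def Dp_def p_def)
  have xr: "cnj x = x" unfolding x_def by (rule herm_real[OF sa ya])
  have bhp: "co b (h - p) = - B" using bsym[of "h - p"] by (simp add: B_def m2)
  have "m - (h - p + 1) = h + p - 1" by (simp add: m2)
  then have bhp1: "co b (h - p + 1) = - B1" using bsym[of "h - p + 1"] by (simp add: B1_def add_diff_eq)
  note BT = bst_top[OF h(2) h(3)]
  have E1: "x * Dp = - (B * cnj B)"
  proof -
    have "co (a * d) (p + p) = x * Dp" using ad_top(2)[OF ya yd] pq by (simp add: x_def Dp_def p_def)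
    moreover have "co (b * st b) (p + p) = - (B * cnj B)"
      using BT(2) h(4) bhp by (simp add: B_def hi m2)
    moreover have "p + p \<noteq> 0" using pq by simp
    ultimately show ?thesis using HYP_det[OF H, of "p + p"] by simp
  qed
  have E2: "x * d1 + a1 * Dp = - (B * cnj B1) - B1 * cnj B"
  proof -
    have "co (a * d) (p + p - 1) = x * d1 + a1 * Dp"
      using ad_top(3)[OF ya yd] pq by (simp add: x_def Dp_def p_def a1_def d1_def)
    moreover have "co (b * st b) (p + p - 1) = - (B * cnj B1) - B1 * cnj B"
    proof -
      have "co (b * st b) (2 * hi - m - 1) = co b hi * cnj (co b (m - hi + 1)) + co b (hi - 1) * cnj (co b (m - hi))"
        by (rule BT(3))
      then show ?thesis using h(4) bhp bhp1 by (simp add: B_def B1_def hi m2 algebra_simps)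
    qed
    moreover have "p + p - 1 \<noteq> 0" using pq by simp
    ultimately show ?thesis using HYP_det[OF H, of "p + p - 1"] by simp
  qed
  have B0: "B \<noteq> 0" using E1 x0 D0 by auto
  have cB0: "cnj B \<noteq> 0" using B0 by simp
  define t where "t = - x / cnj B"
  have ct: "cnj t = - x / B" unfolding t_def using xr by simp
  have t0: "t \<noteq> 0" using x0 cB0 by (simp add: t_def)
  have Dpv: "Dp = - (B * cnj B) / x" using E1 x0 by (simp add: field_simps)
  have F1: "x + cnj t * B + t * cnj B - t * cnj t * Dp = 0"
    unfolding ct Dpv using B0 x0 by (simp add: t_def field_simps)
  have F2: "x + x + (t * cnj t * Dp + t * cnj t * Dp) = 0"
    unfolding ct Dpv using B0 x0 by (simp add: t_def field_simps)
  have F3: "a1 + cnj t * B1 + t * cnj B1 - t * cnj t * d1 = 0"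
  proof -
    have num: "a1 * (B * cnj B) - x * B1 * cnj B - x * cnj B1 * B - x * x * d1 = 0"
    proof -
      have "a1 * (B * cnj B) - x * B1 * cnj B - x * cnj B1 * B - x * x * d1
          = - x * (x * d1 + a1 * Dp + B * cnj B1 + B1 * cnj B) + a1 * (x * Dp + B * cnj B)"
        by (simp add: algebra_simps)
      also have "\<dots> = 0" using E1 E2 by simp
      finally show ?thesis .
    qed
    have "a1 + cnj t * B1 + t * cnj B1 - t * cnj t * d1
        = (a1 * (B * cnj B) - x * B1 * cnj B - x * cnj B1 * B - x * x * d1) / (B * cnj B)"
      unfolding ct using B0 cB0 by (simp add: t_def field_simps)
    then show ?thesis using num by simp
  qed
  define Z where "Z = mo 1 (1::complex)"
  define Zi where "Zi = mo (-1) (1::complex)"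
  define Mt where "Mt = mo h t"
  define Mc where "Mc = mo (- h) (cnj t)"
  define Tt where "Tt = mo 0 (t * cnj t)"
  define e11 where "e11 = 1 + Z"
  define e12 where "e12 = Mt * (1 - Z)"
  define e21 where "e21 = 1 - Z"
  define e22 where "e22 = Mt * (1 + Z)"
  have se11: "st e11 = 1 + Zi" by (simp add: e11_def Z_def Zi_def st_simps)
  have se12: "st e12 = Mc * (1 - Zi)" by (simp add: e12_def Mt_def Mc_def Z_def Zi_def st_simps)
  have se21: "st e21 = 1 - Zi" by (simp add: e21_def Z_def Zi_def st_simps)
  have se22: "st e22 = Mc * (1 + Zi)" by (simp add: e22_def Mt_def Mc_def Z_def Zi_def st_simps)
  have zz: "Z * Zi = 1" by (simp add: Z_def Zi_def mo_mult)
  have mm: "Mt * Mc = Tt" by (simp add: Mt_def Mc_def Tt_def mo_mult)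
  define a' where "a' = e11 * a * st e11 + e11 * b * st e12 + e12 * st b * st e11 + e12 * d * st e12"
  define b' where "b' = e11 * a * st e21 + e11 * b * st e22 + e12 * st b * st e21 + e12 * d * st e22"
  define d' where "d' = e21 * a * st e21 + e21 * b * st e22 + e22 * st b * st e21 + e22 * d * st e22"
  have sb': "st b' = e21 * a * st e11 + e21 * b * st e12 + e22 * st b * st e11 + e22 * d * st e12"
    by (simp add: b'_def st_simps sa sd algebra_simps)
  have sa': "st a' = a'" by (simp add: a'_def st_simps sa sd algebra_simps)
  have sd': "st d' = d'" by (simp add: d'_def st_simps sa sd algebra_simps)
  have y11: "sy e11 (1, 1)" unfolding e11_def Z_def by (rule syZ1)
  have y21: "sy e21 (-1, 1)" unfolding e21_def Z_def by (rule syZ2)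
  have yM: "sy Mt (1, 2 * h)" unfolding Mt_def by (rule sy_mo) simp
  have y12: "sy e12 (-1, 2 * h + 1)" unfolding e12_def Z_def
    by (rule sy_mult[OF yM syZ2]) (simp add: type_mult_def)
  have y22: "sy e22 (1, 2 * h + 1)" unfolding e22_def Z_def
    by (rule sy_mult[OF yM syZ1]) (simp add: type_mult_def)
  have ys11: "sy (st e11) (1, -1)" by (rule sy_st[OF y11]) simp
  have ys21: "sy (st e21) (-1, -1)" by (rule sy_st[OF y21]) simp
  have ys12: "sy (st e12) (-1, - 2 * h - 1)" by (rule sy_st[OF y12]) simp
  have ys22: "sy (st e22) (1, - 2 * h - 1)" by (rule sy_st[OF y22]) simp
  have yb2: "sy b (-1, 2 * h)" using yb al m2 by simp
  have ysb: "sy (st b) (-1, - 2 * h)" by (rule sy_st[OF yb2]) simp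
  have ya': "sy a' (1, 0)" unfolding a'_def
    by (intro sy_add sy_mult3[OF y11 ya ys11] sy_mult3[OF y11 yb2 ys12] sy_mult3[OF y12 ysb ys11]
        sy_mult3[OF y12 yd ys12]) (auto simp: type_mult_def)
  have yb': "sy b' (-1, 0)" unfolding b'_def
    by (intro sy_add sy_mult3[OF y11 ya ys21] sy_mult3[OF y11 yb2 ys22] sy_mult3[OF y12 ysb ys21]
        sy_mult3[OF y12 yd ys22]) (auto simp: type_mult_def)
  have yd': "sy d' (1, 0)" unfolding d'_def
    by (intro sy_add sy_mult3[OF y21 ya ys21] sy_mult3[OF y21 yb2 ys22] sy_mult3[OF y22 ysb ys21]
        sy_mult3[OF y22 yd ys22]) (auto simp: type_mult_def)
  have dE: "e11 * e22 - e12 * e21 = mo (h + 1) (4 * t)"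
  proof -
    have "e11 * e22 - e12 * e21 = 4 * (Mt * Z)" by (simp add: e11_def e12_def e21_def e22_def algebra_simps)
    also have "\<dots> = mo 0 4 * mo (h + 1) t" by (simp add: Mt_def Z_def mo_mult)
    also have "\<dots> = mo (h + 1) (4 * t)" by (simp only: mo_mult) simp
    finally show ?thesis .
  qed
  have sdE: "st e11 * st e22 - st e12 * st e21 = mo (- (h + 1)) (4 * cnj t)"
    using arg_cong[OF dE, of st] by (simp add: st_simps)
  define C' where "C' = 16 * (cmod t)\<^sup>2 * C"
  have C'0: "C' < 0" using C t0 by (simp add: C'_def mult_pos_neg)
  have det': "a' * d' - b' * st b' = mo 0 (of_real C')"
  proof -
    have "a' * d' - b' * st b' = (e11 * e22 - e12 * e21) * (st e11 * st e22 - st e12 * st e21) * (a * d - b * st b)"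
      unfolding sb' by (unfold a'_def d'_def b'_def) (rule det_abs)
    also have "\<dots> = mo 0 (16 * (t * cnj t) * of_real C)" unfolding dE sdE det by (simp add: mo_mult algebra_simps)
    also have "\<dots> = mo 0 (of_real C')"
      unfolding C'_def complex_norm_square[symmetric] by simp
    finally show ?thesis .
  qed
  have H': "HYP a' b' d' (-1, 0) C'" using C'0 sa' sd' ya' yd' yb' det' by (simp add: HYP_def)
  have ea': "a' = a + a + Z * a + Zi * a + Mc * (Z * b) - Mc * (Zi * b) + Mt * (Zi * st b) - Mt * (Z * st b)
       + Tt * d + Tt * d - Tt * (Z * d) - Tt * (Zi * d)"
  proof -
    have "a' = (1 + Z) * a * (1 + Zi) + (1 + Z) * b * (Mc * (1 - Zi)) + Mt * (1 - Z) * st b * (1 + Zi) + Mt * (1 - Z) * d * (Mc * (1 - Zi))"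
      unfolding a'_def se11 se12 by (simp add: e11_def e12_def)
    then show ?thesis using expand_a_abs[OF zz mm, of a b "st b" d] by simp
  qed
  have ed': "d' = a + a - Z * a - Zi * a + Mc * (Zi * b) - Mc * (Z * b) + Mt * (Z * st b) - Mt * (Zi * st b)
       + Tt * d + Tt * d + Tt * (Z * d) + Tt * (Zi * d)"
  proof -
    have "d' = (1 - Z) * a * (1 - Zi) + (1 - Z) * b * (Mc * (1 + Zi)) + Mt * (1 + Z) * st b * (1 - Zi) + Mt * (1 + Z) * d * (Mc * (1 + Zi))"
      unfolding d'_def se21 se22 by (simp add: e21_def e22_def)
    then show ?thesis using expand_d_abs[OF zz mm, of a b "st b" d] by simp
  qed
  have ca': "co a' k = co a k + co a k + co a (k - 1) + co a (k + 1) + cnj t * co b (k + h - 1) - cnj t * co b (k + h + 1)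
      + t * cnj (co b (h - k - 1)) - t * cnj (co b (h - k + 1))
      + t * cnj t * co d k + t * cnj t * co d k - t * cnj t * co d (k - 1) - t * cnj t * co d (k + 1)" for k
    unfolding ea' Z_def Zi_def Mt_def Mc_def Tt_def
    by (simp only: co_add co_diff co_mo_mult co_st) (simp add: algebra_simps)
  have cd': "co d' k = co a k + co a k - co a (k - 1) - co a (k + 1) + cnj t * co b (k + h + 1) - cnj t * co b (k + h - 1)
      + t * cnj (co b (h - k + 1)) - t * cnj (co b (h - k - 1))
      + t * cnj t * co d k + t * cnj t * co d k + t * cnj t * co d (k - 1) + t * cnj t * co d (k + 1)" for k
    unfolding ed' Z_def Zi_def Mt_def Mc_def Tt_def
    by (simp only: co_add co_diff co_mo_mult co_st) (simp add: algebra_simps)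
  have a'z: "co a' k = 0" if kp: "k \<ge> p" for k
  proof -
    consider "k = p" | "k = p + 1" | "k \<ge> p + 2" using kp by linarith
    then show ?thesis
    proof cases
      case 1
      have "co a' k = x + x + a1 + cnj t * B1 + t * cnj B1 + t * cnj t * Dp + t * cnj t * Dp - t * cnj t * d1"
        unfolding ca' 1 using az[of "p + 1"] bz[of "p + h + 1"] bl[of "h - p - 1"] bhp1
        by (simp add: x_def a1_def B1_def Dp_def d1_def dz algebra_simps)
      also have "\<dots> = (x + x + (t * cnj t * Dp + t * cnj t * Dp)) + (a1 + cnj t * B1 + t * cnj B1 - t * cnj t * d1)"
        by (simp add: algebra_simps)
      finally show ?thesis using F2 F3 by simp
    next
      case 2
      have "co a' k = x + cnj t * B + t * cnj B - t * cnj t * Dp"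
        unfolding ca' 2 using az[of "p + 1"] az[of "p + 2"] bz[of "p + h + 2"] bl[of "h - p - 2"] bhp
          dz[of "p + 1"] dz[of "p + 2"]
        by (simp add: x_def B_def Dp_def algebra_simps)
      then show ?thesis using F1 by simp
    next
      case 3
      then show ?thesis unfolding ca'
        using az[of k] az[of "k - 1"] az[of "k + 1"] bz[of "k + h - 1"] bz[of "k + h + 1"]
          bl[of "h - k - 1"] bl[of "h - k + 1"] dz[of k] dz[of "k - 1"] dz[of "k + 1"] pq by simp
    qed
  qed
  have d'z: "co d' k = 0" if kp: "k \<ge> p" for k
  proof -
    consider "k = p" | "k = p + 1" | "k \<ge> p + 2" using kp by linarith
    then show ?thesis
    proof cases
      case 1
      have "co d' k = x + x - a1 - cnj t * B1 - t * cnj B1 + t * cnj t * Dp + t * cnj t * Dp + t * cnj t * d1"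
        unfolding cd' 1 using az[of "p + 1"] bz[of "p + h + 1"] bl[of "h - p - 1"] bhp1
        by (simp add: x_def a1_def B1_def Dp_def d1_def dz algebra_simps)
      also have "\<dots> = (x + x + (t * cnj t * Dp + t * cnj t * Dp)) - (a1 + cnj t * B1 + t * cnj B1 - t * cnj t * d1)"
        by (simp add: algebra_simps)
      finally show ?thesis using F2 F3 by simp
    next
      case 2
      have "co d' k = - (x + cnj t * B + t * cnj B - t * cnj t * Dp)"
        unfolding cd' 2 using az[of "p + 1"] az[of "p + 2"] bz[of "p + h + 2"] bl[of "h - p - 2"] bhp
          dz[of "p + 1"] dz[of "p + 2"]
        by (simp add: x_def B_def Dp_def algebra_simps)
      then show ?thesis using F1 by simp
    next
      case 3
      then show ?thesis unfolding cd'
        using az[of k] az[of "k - 1"] az[of "k + 1"] bz[of "k + h - 1"] bz[of "k + h + 1"]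
          bl[of "h - k - 1"] bl[of "h - k + 1"] dz[of k] dz[of "k - 1"] dz[of "k + 1"] pq by simp
    qed
  qed
  have dga': "dg a' \<le> dg a - 1"
    by (rule dg_le) (use a'z pq p_def in auto)
  have dgd': "dg d' \<le> dg a - 1"
    by (rule dg_le) (use d'z pq p_def in auto)
  have meas: "dg a' + dg d' < dg a + dg d" using dga' dgd' pd eq by linarith
  define g where "g = mo (- (h + 1)) (1 / (4 * t))"
  define sg where "sg = st g"
  have g1: "g * (e11 * e22 - e12 * e21) = 1"
    unfolding dE g_def using t0 by (simp add: mo_mult)
  have sg1: "sg * (st e11 * st e22 - st e12 * st e21) = 1"
    using arg_cong[OF g1, of st] by (simp add: sg_def st_simps)
  have yg: "sy g (1, - 2 * h - 2)" unfolding g_def by (rule sy_mo) simp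
  have lift: "FAC a b d \<alpha>" if F: "FAC a' b' d' (-1, 0)"
  proof -
    obtain v11 v12 v21 v22 s11 s12 s21 s22 where
      u: "a' = v11 * st v11 - v12 * st v12" "b' = v11 * st v21 - v12 * st v22" "d' = v21 * st v21 - v22 * st v22"
      "sy v11 s11" "sy v12 s12" "sy v21 s21" "sy v22 s22"
      "type_mult s11 (type_inv s21) = (-1, 0)" "type_mult s12 (type_inv s22) = (-1, 0)"
      using F unfolding FAC_def by blast
    have h3: "st b' = v21 * st v11 - v22 * st v12" using arg_cong[OF u(2), of st]
      by (simp add: st_simps mult.commute)
    note L = lift_abs[OF u(1)[unfolded a'_def] u(2)[unfolded b'_def]
        h3[unfolded sb'] u(3)[unfolded d'_def] g1 sg1]
    define u11 where "u11 = g * e22 * v11 - g * e12 * v21"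
    define u12 where "u12 = g * e22 * v12 - g * e12 * v22"
    define u21 where "u21 = g * e11 * v21 - g * e21 * v11"
    define u22 where "u22 = g * e11 * v22 - g * e21 * v12"
    have st11: "st u11 = sg * st e22 * st v11 - sg * st e12 * st v21" by (simp add: u11_def sg_def st_simps)
    have st12: "st u12 = sg * st e22 * st v12 - sg * st e12 * st v22" by (simp add: u12_def sg_def st_simps)
    have st21: "st u21 = sg * st e11 * st v21 - sg * st e21 * st v11" by (simp add: u21_def sg_def st_simps)
    have st22: "st u22 = sg * st e11 * st v22 - sg * st e21 * st v12" by (simp add: u22_def sg_def st_simps)
    have ea: "a = u11 * st u11 - u12 * st u12" unfolding st11 st12 by (unfold u11_def u12_def) (rule L(1))
    have eb: "b = u11 * st u21 - u12 * st u22" unfolding st21 st22 by (unfold u11_def u12_def) (rule L(2))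
    have ed: "d = u21 * st u21 - u22 * st u22" unfolding st21 st22 by (unfold u21_def u22_def) (rule L(3))
    obtain e1 c1 where s11: "s11 = (e1, c1)" by (cases s11)
    obtain e2 c2 where s21: "s21 = (e2, c2)" by (cases s21)
    obtain e3 c3 where s12: "s12 = (e3, c3)" by (cases s12)
    obtain e4 c4 where s22: "s22 = (e4, c4)" by (cases s22)
    have v1: "e1 = 1 \<or> e1 = -1" "e2 = 1 \<or> e2 = -1" "e3 = 1 \<or> e3 = -1" "e4 = 1 \<or> e4 = -1"
      using sy_valid[OF u(4)] sy_valid[OF u(6)] sy_valid[OF u(5)] sy_valid[OF u(7)] s11 s21 s12 s22 by auto
    have r1: "e1 * e2 = -1" "c1 = c2" using u(8) s11 s21 by (auto simp: type_mult_def type_inv_def)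
    have r2: "e3 * e4 = -1" "c3 = c4" using u(9) s12 s22 by (auto simp: type_mult_def type_inv_def)
    have n1: "e2 = - e1" using r1 v1 by auto
    have n2: "e4 = - e3" using r2 v1 by auto
    have y11: "sy u11 (e1, c1 - 1)" unfolding u11_def
      by (intro sy_diff sy_mult3[OF yg y22 u(4)] sy_mult3[OF yg y12 u(6)])
         (auto simp: type_mult_def s11 s21 n1 r1)
    have y12: "sy u12 (e3, c3 - 1)" unfolding u12_def
      by (intro sy_diff sy_mult3[OF yg y22 u(5)] sy_mult3[OF yg y12 u(7)])
         (auto simp: type_mult_def s12 s22 n2 r2)
    have y21: "sy u21 (e2, c2 - 2 * h - 1)" unfolding u21_def
      by (intro sy_diff sy_mult3[OF yg \<open>sy e11 (1, 1)\<close> u(6)] sy_mult3[OF yg \<open>sy e21 (-1, 1)\<close> u(4)])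
         (auto simp: type_mult_def s11 s21 n1 r1)
    have y22: "sy u22 (e4, c4 - 2 * h - 1)" unfolding u22_def
      by (intro sy_diff sy_mult3[OF yg \<open>sy e11 (1, 1)\<close> u(7)] sy_mult3[OF yg \<open>sy e21 (-1, 1)\<close> u(5)])
         (auto simp: type_mult_def s12 s22 n2 r2)
    show ?thesis
      by (rule FACI[OF ea eb ed y11 y12 y21 y22]) (auto simp: type_mult_def type_inv_def al m2 r1 r2)
  qed
  show ?thesis using H' meas lift by blast
qed


lemma step_lemma:
  assumes H: "HYP a b d \<alpha> C" and le: "dg d \<le> dg a"
    and IH: "\<And>a' b' d' \<alpha>' C'. dg a' + dg d' < dg a + dg d \<Longrightarrow> HYP a' b' d' \<alpha>' C' \<Longrightarrow> FAC a' b' d' \<alpha>'"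
  shows "FAC a b d \<alpha>"
proof (cases "dg d = 0")
  case True
  then show ?thesis using base H by blast
next
  case False
  then have pd: "1 \<le> dg d" by simp
  show ?thesis
  proof (cases "dg a = dg d \<and> fst \<alpha> = -1")
    case True
    obtain a' b' d' \<alpha>' C' where "HYP a' b' d' \<alpha>' C'" "dg a' + dg d' < dg a + dg d" "FAC a' b' d' \<alpha>' \<longrightarrow> FAC a b d \<alpha>"
      using estep[OF H pd] True by blast
    then show ?thesis using IH by blast
  next
    case False
    obtain a' b' where "HYP a' b' d \<alpha> C" "dg a' < dg a" "FAC a' b' d \<alpha> \<longrightarrow> FAC a b d \<alpha>"
      using tri[OF H pd le False] by blast
    then show ?thesis using IH[of a' d b' \<alpha> C] by auto
  qed
qed

lemma main: "HYP a b d \<alpha> C \<Longrightarrow> FAC a b d \<alpha>"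
proof (induction "dg a + dg d" arbitrary: a b d \<alpha> C rule: less_induct)
  case less
  show ?case
  proof (cases "dg d \<le> dg a")
    case True
    then show ?thesis using step_lemma[OF less.prems True] less.hyps by blast
  next
    case False
    have H': "HYP d (st b) a (type_star \<alpha>) C" using HYP_swap[OF less.prems] .
    have IH': "FAC a' b' d' \<alpha>'" if "dg a' + dg d' < dg d + dg a" "HYP a' b' d' \<alpha>' C'" for a' b' d' \<alpha>' C'
      using less.hyps[of a' d' b' \<alpha>' C'] that by (simp add: add.commute)
    have "FAC d (st b) a (type_star \<alpha>)"
      by (rule step_lemma[OF H']) (use False IH' in auto)
    then show ?thesis by (rule FAC_swap)
  qed
qed

lemma keys_set: "{k. co p k \<noteq> 0} = ks p" by (auto simp: in_keys_iff)

lemma lp_mult_co: "lp_mult (co p) (co q) = co (p * q)"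
  by (simp add: lp_mult_def keys_set co_mult_keys fun_eq_iff)
lemma lp_star_co: "lp_star (co p) = co (st p)"
  by (simp add: lp_star_def co_st fun_eq_iff)
lemma lp_add_co: "lp_add (co p) (co q) = co (p + q)"
  by (simp add: lp_add_def co_add fun_eq_iff)
lemma lp_neg_co: "lp_neg (co p) = co (- p)"
  by (simp add: lp_neg_def fun_eq_iff)
lemma lp_eval_co: "lp_eval (co p) z = ev p z"
  by (simp add: lp_eval_def ev_def keys_set)
lemma laurent_co: "laurent (co p)"
  by (simp add: laurent_def keys_set)

lemma co_inj: "co p = co q \<Longrightarrow> p = q"
  by (rule poly_mapping_eqI) simp

theorem theorem3p4:
  fixes A :: "nat \<Rightarrow> nat \<Rightarrow> lpoly" and \<alpha> :: symtype and C :: real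
  assumes lp: "\<forall>j\<in>{1,2}. \<forall>k\<in>{1,2}. laurent (A j k)"
    and herm: "\<forall>j\<in>{1,2}. \<forall>k\<in>{1,2}. lp_star (A k j) = A j k"
    and compat: "compat_sym 2 2 A"
    and sym11: "has_sym (A 1 1) (1, 0)"
    and sym12: "has_sym (A 1 2) \<alpha>"
    and sym21: "has_sym (A 2 1) (type_star \<alpha>)"
    and sym22: "has_sym (A 2 2) (1, 0)"
    and Cneg: "C < 0"
    and det: "\<forall>z. cmod z = 1 \<longrightarrow>
        lp_eval (A 1 1) z * lp_eval (A 2 2) z - lp_eval (A 1 2) z * lp_eval (A 2 1) z
          = complex_of_real C"
  shows "\<exists>U :: nat \<Rightarrow> nat \<Rightarrow> lpoly.
           (\<forall>j\<in>{1,2}. \<forall>k\<in>{1,2}. laurent (U j k)) \<and>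
           compat_sym 2 2 U \<and>
           (\<forall>j\<in>{1,2}. \<forall>k\<in>{1,2}.
              A j k = lp_add (lp_mult (U j 1) (lp_star (U k 1)))
                             (lp_neg (lp_mult (U j 2) (lp_star (U k 2))))) \<and>
           (\<exists>\<sigma> :: nat \<Rightarrow> nat \<Rightarrow> symtype.
              (\<forall>j\<in>{1,2}. \<forall>k\<in>{1,2}. has_sym (U j k) (\<sigma> j k)) \<and>
              type_mult (\<sigma> 1 1) (type_inv (\<sigma> 2 1)) = \<alpha> \<and>
              type_mult (\<sigma> 1 2) (type_inv (\<sigma> 2 2)) = \<alpha>)"
proof -
  define a where "a = Abs_poly_mapping (A 1 1)"
  define b where "b = Abs_poly_mapping (A 1 2)"
  define d where "d = Abs_poly_mapping (A 2 2)"
  have fin: "finite {k. A j k' k \<noteq> 0}" if "j \<in> {1,2}" "k' \<in> {1,2}" for j k'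
    using lp that by (auto simp: laurent_def)
  have ca: "co a = A 1 1" unfolding a_def using fin[of 1 1] by simp
  have cb: "co b = A 1 2" unfolding b_def using fin[of 1 2] by simp
  have cd: "co d = A 2 2" unfolding d_def using fin[of 2 2] by simp
  have A21: "A 2 1 = co (st b)" using herm cb lp_star_co[of b] by force
  have sa: "st a = a" using herm ca lp_star_co[of a] by (intro co_inj) force
  have sd: "st d = d" using herm cd lp_star_co[of d] by (intro co_inj) force
  have ya: "sy a (1, 0)" using sym11 ca by (simp add: sy_def)
  have yd: "sy d (1, 0)" using sym22 cd by (simp add: sy_def)
  have yb: "sy b \<alpha>" using sym12 cb by (simp add: sy_def)
  have dt: "a * d - b * st b = mo 0 (of_real C)"
  proof -
    have "a * d - b * st b - mo 0 (of_real C) = 0"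
    proof (rule ev_circle_zero)
      fix z :: complex assume z: "cmod z = 1"
      then have z0: "z \<noteq> 0" by auto
      have "ev (a * d - b * st b - mo 0 (of_real C)) z = ev a z * ev d z - ev b z * ev (st b) z - of_real C"
        by (simp add: ev_diff ev_mult[OF z0] ev_mo)
      also have "\<dots> = 0" using det z
        by (simp add: lp_eval_co[symmetric] ca cb cd A21[symmetric])
      finally show "ev (a * d - b * st b - mo 0 (of_real C)) z = 0" .
    qed
    then show ?thesis by simp
  qed
  have H: "HYP a b d \<alpha> C" using Cneg sa sd ya yd yb dt by (simp add: HYP_def)
  obtain u11 u12 u21 u22 s11 s12 s21 s22 where
    u: "a = u11 * st u11 - u12 * st u12" "b = u11 * st u21 - u12 * st u22" "d = u21 * st u21 - u22 * st u22"
    "sy u11 s11" "sy u12 s12" "sy u21 s21" "sy u22 s22"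
    "type_mult s11 (type_inv s21) = \<alpha>" "type_mult s12 (type_inv s22) = \<alpha>"
    using main[OF H] unfolding FAC_def by blast
  have sb: "st b = u21 * st u11 - u22 * st u12" using arg_cong[OF u(2), of st]
    by (simp add: st_simps mult.commute)
  define U where "U = (\<lambda>j k. if j = (1::nat) then (if k = (1::nat) then co u11 else co u12)
                          else (if k = 1 then co u21 else co u22))"
  define \<sigma> where "\<sigma> = (\<lambda>j k. if j = (1::nat) then (if k = (1::nat) then s11 else s12)
                          else (if k = 1 then s21 else s22))"
  have U1: "laurent (U j k)" for j k by (simp add: U_def laurent_co)
  have Ueq: "A j k = lp_add (lp_mult (U j 1) (lp_star (U k 1))) (lp_neg (lp_mult (U j 2) (lp_star (U k 2))))"
    if "j \<in> {1,2}" "k \<in> {1,2}" for j k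
  proof -
    have "lp_add (lp_mult (U j 1) (lp_star (U k 1))) (lp_neg (lp_mult (U j 2) (lp_star (U k 2))))
        = co ((if j = 1 then u11 else u21) * st (if k = 1 then u11 else u21) + - ((if j = 1 then u12 else u22) * st (if k = 1 then u12 else u22)))"
      using that by (auto simp: U_def lp_star_co lp_mult_co lp_neg_co lp_add_co)
    then show ?thesis using that u(1,2,3) sb ca cb cd A21 by auto
  qed
  have ysig: "has_sym (U j k) (\<sigma> j k)" if "j \<in> {1,2}" "k \<in> {1,2}" for j k
    using that u(4-7) by (auto simp: U_def \<sigma>_def sy_def)
  have vals: "valid_type s11" "valid_type s12" "valid_type s21" "valid_type s22" "valid_type \<alpha>"
    using sy_valid[OF u(4)] sy_valid[OF u(5)] sy_valid[OF u(6)] sy_valid[OF u(7)] sy_valid[OF yb]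
    by (auto simp: valid_type_def)
  have tback: "type_mult (type_inv \<alpha>) s = s2" if "type_mult s (type_inv s2) = \<alpha>" "valid_type s" for s s2
    using that by (cases s; cases s2) (auto simp: type_mult_def type_inv_def valid_type_def)
  define \<tau> where "\<tau> = (\<lambda>j. if j = (1::nat) then (1::int, 0::int) else \<alpha>)"
  define \<rho> where "\<rho> = (\<lambda>k. if k = (1::nat) then s11 else s12)"
  have c1: "\<forall>j\<in>{1..2::nat}. valid_type (\<tau> j)" using vals by (auto simp: \<tau>_def valid_type_def)
  have c2: "\<forall>k\<in>{1..2::nat}. valid_type (\<rho> k)" using vals by (auto simp: \<rho>_def)
  have t1: "type_mult (type_inv (1, 0)) s = s" for s :: symtype by (cases s) (simp add: type_mult_def type_inv_def)
  have c3: "\<forall>j\<in>{1..2::nat}. \<forall>k\<in>{1..2::nat}. has_sym (U j k) (type_mult (type_inv (\<tau> j)) (\<rho> k))"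
  proof (intro ballI)
    fix j k assume j: "j \<in> {1..2::nat}" and k: "k \<in> {1..2::nat}"
    have jj: "j = 1 \<or> j = 2" and kk: "k = 1 \<or> k = 2" using j k by auto
    show "has_sym (U j k) (type_mult (type_inv (\<tau> j)) (\<rho> k))"
      using jj kk u(4-7) tback[OF u(8) vals(1)] tback[OF u(9) vals(2)] t1
      by (auto simp: U_def sy_def \<tau>_def \<rho>_def)
  qed
  have cs: "compat_sym 2 2 U" unfolding compat_sym_def using c1 c2 c3 by blast
  have fin1: "\<forall>j\<in>{1,2}. \<forall>k\<in>{1,2}. laurent (U j k)" using U1 by blast
  have fin2: "\<forall>j\<in>{1,2}. \<forall>k\<in>{1,2}. A j k = lp_add (lp_mult (U j 1) (lp_star (U k 1))) (lp_neg (lp_mult (U j 2) (lp_star (U k 2))))"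
    using Ueq by blast
  have fin3: "(\<forall>j\<in>{1,2}. \<forall>k\<in>{1,2}. has_sym (U j k) (\<sigma> j k)) \<and>
              type_mult (\<sigma> 1 1) (type_inv (\<sigma> 2 1)) = \<alpha> \<and> type_mult (\<sigma> 1 2) (type_inv (\<sigma> 2 2)) = \<alpha>"
    using ysig u(8,9) by (simp add: \<sigma>_def)
  show ?thesis using fin1 cs fin2 fin3 by blast
qed


end
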